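(* Let $q=r^2$ where $r$ is an odd prime power, and let $q-1=e_1f_1=e_2f_2$ with positive integers $e_1,f_1,e_2,f_2$. Suppose there is an integer $l\geq 2$ with $e_1\equiv 2^l \pmod{2^{l+1}}$ and $2^l\mid e_2$. Suppose further that $2e_2\mid e_1(r+1)$ and $e_1\mid e_2(r-1)$. Let $D_1=\frac{e_1}{\gcd(e_1,e_2)}$, $D_2=\frac{e_2}{\gcd(e_1,e_2)}$, let $s,t$ be integers with $1\leq s\leq D_1$, $1\leq t\leq D_2$, and put $n_1=sf_1+tf_2$. Then: (1) if both $\frac{te_1(r+1)}{2e_2}+\frac{r+1}{2}$ and $n_1$ are even, then for every $k$ with $1\leq k\leq \frac{n_1}{2}-1$ there exists a $q$-ary $[n_1,k]$ MDS self-orthogonal code; (2) if $\frac{t(r+1)e_1}{2e_2}$, $\frac{r+1}{2}$ and $n_1$ are all even, there exists a $q$-ary MDS almost self-dual code of length $n_1+1$; (3) if both $\frac{te_1(r+1)}{2e_2}+\frac{t(r+1)}{2}$ and $\frac{(t-1)(r+1)}{2}$ are even and $n_1$ is odd, then for every $k$ with $1\leq k\leq \frac{n_1+1}{2}-1$ there exists a $q$-ary $[n_1+1,k]$ MDS self-orthogonal code.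
   Context: $\mathbb{F}_q$ denotes the finite field with $q$ elements. A linear code of length $n$ over $\mathbb{F}_q$ is a subspace of $\mathbb{F}_q^n$; an $[n,k]$ code has dimension $k$, and an $[n,k,d]$ code is MDS if its minimum Hamming distance is $d=n-k+1$. The (Euclidean) dual of a code $C$ is $C^\perp=\{x\in\mathbb{F}_q^n : \sum_i x_ic_i=0 \text{ for all } c\in C\}$. $C$ is self-orthogonal if $C\subseteq C^\perp$, and almost self-dual if $C\subseteq C^\perp$ and $\dim C^\perp=\dim C+1$. An MDS almost self-dual code is an almost self-dual code that is MDS. *)

theory Defs
  imports Complex_Main "HOL-Library.Function_Algebras" "HOL-Computational_Algebra.Primes"
begin

text \<open>Vectors of length n over a field are modelled as functions nat => 'a
  vanishing outside the index set {0..<n}; the ambient space F_q^n is fn_space n.\<close>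

definition vscale :: "'a::field \<Rightarrow> (nat \<Rightarrow> 'a) \<Rightarrow> (nat \<Rightarrow> 'a)" where
  "vscale c v = (\<lambda>i. c * v i)"

definition fn_space :: "nat \<Rightarrow> (nat \<Rightarrow> 'a::zero) set" where
  "fn_space n = {v. \<forall>i\<ge>n. v i = 0}"

definition linear_code :: "nat \<Rightarrow> (nat \<Rightarrow> 'a::field) set \<Rightarrow> bool" where
  "linear_code n C \<longleftrightarrow> C \<subseteq> fn_space n \<and> module.subspace vscale C"

definition code_dim :: "(nat \<Rightarrow> 'a::field) set \<Rightarrow> nat" where
  "code_dim C = vector_space.dim vscale C"

definition hamming_wt :: "nat \<Rightarrow> (nat \<Rightarrow> 'a::zero) \<Rightarrow> nat" where
  "hamming_wt n v = card {i. i < n \<and> v i \<noteq> 0}"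

definition min_dist :: "nat \<Rightarrow> (nat \<Rightarrow> 'a::field) set \<Rightarrow> nat" where
  "min_dist n C = Inf {hamming_wt n v | v. v \<in> C \<and> v \<noteq> 0}"

definition dual_code :: "nat \<Rightarrow> (nat \<Rightarrow> 'a::field) set \<Rightarrow> (nat \<Rightarrow> 'a) set" where
  "dual_code n C = {x \<in> fn_space n. \<forall>c\<in>C. (\<Sum>i<n. x i * c i) = 0}"

definition nk_code :: "nat \<Rightarrow> nat \<Rightarrow> (nat \<Rightarrow> 'a::field) set \<Rightarrow> bool" where
  "nk_code n k C \<longleftrightarrow> linear_code n C \<and> code_dim C = k"

definition is_MDS :: "nat \<Rightarrow> (nat \<Rightarrow> 'a::field) set \<Rightarrow> bool" where
  "is_MDS n C \<longleftrightarrow> linear_code n C \<and> min_dist n C = n - code_dim C + 1"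

definition self_orthogonal :: "nat \<Rightarrow> (nat \<Rightarrow> 'a::field) set \<Rightarrow> bool" where
  "self_orthogonal n C \<longleftrightarrow> linear_code n C \<and> C \<subseteq> dual_code n C"

definition almost_self_dual :: "nat \<Rightarrow> (nat \<Rightarrow> 'a::field) set \<Rightarrow> bool" where
  "almost_self_dual n C \<longleftrightarrow> linear_code n C \<and> C \<subseteq> dual_code n C
     \<and> code_dim (dual_code n C) = code_dim C + 1"

definition prime_power :: "nat \<Rightarrow> bool" where
  "prime_power r \<longleftrightarrow> (\<exists>p m. prime p \<and> m \<ge> 1 \<and> r = p ^ m)"

end

theory Submission
  imports Defs "HOL-Computational_Algebra.Polynomial" "HOL-Algebra.Algebraic_Closure_Type"
begin


lemma vs_vscale: "vector_space (vscale :: 'a::field \<Rightarrow> (nat \<Rightarrow> 'a) \<Rightarrow> _)"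
  by unfold_locales (auto simp: vscale_def fun_eq_iff algebra_simps)

lemma lagrange_sum_zero:
  fixes S :: "'a::field set" and p :: "'a poly"
  assumes fin: "finite S" and deg: "degree p + 2 \<le> card S"
  shows "(\<Sum>x\<in>S. poly p x / (\<Prod>y\<in>S-{x}. x - y)) = 0"
proof -
  define L where "L = (\<Sum>x\<in>S. smult (poly p x / (\<Prod>y\<in>S-{x}. x - y)) (\<Prod>y\<in>S-{x}. [:-y,1:]))"
  have dprod: "degree (\<Prod>y\<in>S-{x}. [:-y,1:]) = card S - 1" if "x \<in> S" for x
    using that fin by (subst degree_prod_sum_eq) auto
  have mprod: "coeff (\<Prod>y\<in>S-{x}. [:-y,1:]) (card S - 1) = 1" if "x \<in> S" for x
  proof -
    have "lead_coeff (\<Prod>y\<in>S-{x}. [:-y,1:]) = 1" by (simp add: lead_coeff_prod)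
    thus ?thesis using dprod[OF that] by simp
  qed
  have degL: "degree L \<le> card S - 1"
    unfolding L_def using fin
    by (intro degree_sum_le) (auto intro: order.trans[OF degree_smult_le] simp: dprod)
  have evL: "poly L z = poly p z" if "z \<in> S" for z
  proof -
    have "poly L z = (\<Sum>x\<in>S. (poly p x / (\<Prod>y\<in>S-{x}. x - y)) * (\<Prod>y\<in>S-{x}. z - y))"
      by (simp add: L_def poly_sum poly_prod)
    also have "\<dots> = (\<Sum>x\<in>{z}. (poly p x / (\<Prod>y\<in>S-{x}. x - y)) * (\<Prod>y\<in>S-{x}. z - y))"
    proof (rule sum.mono_neutral_right)
      show "\<forall>i\<in>S - {z}. poly p i / (\<Prod>y\<in>S - {i}. i - y) * (\<Prod>y\<in>S - {i}. z - y) = 0"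
        using fin that by (auto intro!: prod_zero)
    qed (use fin that in auto)
    also have "\<dots> = poly p z"
      using fin by (simp add: prod_zero_iff)
    finally show ?thesis .
  qed
  have "p = L"
    by (rule poly_eqI_degree[of S]) (use evL deg degL in auto)
  hence "coeff L (card S - 1) = 0"
    using deg by (auto intro!: coeff_eq_0)
  moreover have "coeff L (card S - 1) = (\<Sum>x\<in>S. poly p x / (\<Prod>y\<in>S-{x}. x - y))"
    unfolding L_def coeff_sum coeff_smult using mprod by (intro sum.cong refl) simp
  ultimately show ?thesis by simp
qed


lemma of_nat_card_UNIV_zero: "of_nat (card (UNIV :: 'a::{finite,field} set)) = (0::'a)"
proof -
  have "(\<Sum>x\<in>(UNIV::'a set). x + 1) = (\<Sum>x\<in>(\<lambda>x. x + 1) ` (UNIV::'a set). x)"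
    by (subst sum.reindex) (auto simp: inj_on_def)
  also have "(\<lambda>x::'a. x + 1) ` UNIV = UNIV"
    by (auto intro: image_eqI[of _ _ "_ - 1"])
  finally have "(\<Sum>x\<in>(UNIV::'a set). x) + of_nat (card (UNIV::'a set)) = (\<Sum>x\<in>(UNIV::'a set). x)"
    by (simp add: sum.distrib)
  thus ?thesis by simp
qed

lemma frob:
  fixes x y :: "'a::{finite,field}"
  assumes card: "card (UNIV :: 'a set) = r ^ 2" and pp: "prime_power r"
  shows "(x + y) ^ r = x ^ r + y ^ r"
proof -
  obtain p m where pm: "Factorial_Ring.prime p" "m \<ge> 1" "r = p ^ m" using pp by (auto simp: prime_power_def)
  have cp: "CHAR('a) > 0" by (rule finite_imp_CHAR_pos) simp
  have pc: "Factorial_Ring.prime CHAR('a)" by (rule prime_CHAR_semidom[OF cp])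
  have "CHAR('a) dvd card (UNIV :: 'a set)"
    using of_nat_card_UNIV_zero[where 'a='a] by (simp add: of_nat_eq_0_iff_char_dvd)
  hence "CHAR('a) dvd p ^ (m * 2)" using card pm by (simp add: power_mult)
  hence "CHAR('a) dvd p" using pc prime_dvd_power by blast
  hence "CHAR('a) = p" using pc pm(1) by (simp add: primes_dvd_imp_eq)
  thus ?thesis using freshmans_dream'[OF pc, of r m x y] pm by simp
qed

lemma frob_diff:
  fixes x y :: "'a::{finite,field}"
  assumes card: "card (UNIV :: 'a set) = r ^ 2" and pp: "prime_power r"
  shows "(x - y) ^ r = x ^ r - y ^ r"
  using frob[OF card pp, of "x - y" y] by (simp add: algebra_simps)

lemma pow_rt: "x [^]\<^bsub>(ring_of_type_algebra :: 'a::field ring)\<^esub> (n::nat) = x ^ n"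
proof (induction n)
  case 0 show ?case by (simp add: ring_of_type_algebra_def)
next
  case (Suc n) thus ?case by (simp add: ring_of_type_algebra_def)
qed

lemma exists_generator:
  "\<exists>w::'a::{finite,field}. w \<noteq> 0 \<and> (\<forall>x. x \<noteq> 0 \<longrightarrow> (\<exists>i. x = w ^ i))"
proof -
  interpret field "ring_of_type_algebra :: 'a ring" by (rule field_from_type_algebra)
  obtain a where a: "a \<in> carrier (mult_of ring_of_type_algebra)"
    "carrier (mult_of (ring_of_type_algebra::'a ring)) = {a[^]\<^bsub>ring_of_type_algebra\<^esub>i | i::nat . i \<in> UNIV}"
    using finite_field_mult_group_has_gen by (auto simp: ring_of_type_algebra_def)
  have a0: "a \<noteq> 0" using a(1) by (simp add: ring_of_type_algebra_def)
  show ?thesis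
  proof (rule exI[of _ a], intro conjI a0 allI impI)
    fix x :: 'a assume "x \<noteq> 0"
    hence "x \<in> carrier (mult_of (ring_of_type_algebra::'a ring))" by (simp add: ring_of_type_algebra_def)
    thus "\<exists>i. x = a ^ i" using a(2) by (auto simp: pow_rt)
  qed
qed

lemma power_card_minus_1:
  fixes x :: "'a::{finite,field}"
  assumes "x \<noteq> 0"
  shows "x ^ (card (UNIV :: 'a set) - 1) = 1"
proof -
  have "(\<Prod>y\<in>UNIV-{0}. x * y) = x ^ (card (UNIV :: 'a set) - 1) * \<Prod>(UNIV-{0::'a})"
    by (simp add: prod.distrib)
  moreover have "(\<Prod>y\<in>UNIV-{0}. x * y) = (\<Prod>y\<in>UNIV-{0::'a}. y)"
    by (rule prod.reindex_bij_witness[of _ "\<lambda>y. y / x" "\<lambda>y. x * y"]) (use assms in auto)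
  moreover have "\<Prod>(UNIV-{0::'a}) \<noteq> 0" by (simp add: prod_zero_iff)
  ultimately have "x ^ (card (UNIV :: 'a set) - 1) * \<Prod>(UNIV-{0::'a}) = 1 * \<Prod>(UNIV-{0::'a})" by simp
  thus ?thesis using \<open>\<Prod>(UNIV-{0::'a}) \<noteq> 0\<close> by (rule mult_right_cancel[THEN iffD1, rotated])
qed

lemma prim_aux:
  fixes w :: "'a::{finite,field}"
  assumes w: "\<forall>x. x \<noteq> 0 \<longrightarrow> (\<exists>i. x = w ^ i)"
    and w0: "w \<noteq> 0" and pc: "\<And>x::'a. x \<noteq> 0 \<Longrightarrow> x ^ (card (UNIV :: 'a set) - 1) = 1"
  shows "\<forall>n. w ^ n = 1 \<longleftrightarrow> (card (UNIV :: 'a set) - 1) dvd n"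
proof -
  define Q where "Q = card (UNIV :: 'a set)"
  have Q2: "Q \<ge> 2"
  proof -
    have "card {0::'a, 1} \<le> Q" unfolding Q_def by (rule card_mono) auto
    thus ?thesis by simp
  qed
  have wQ: "w ^ (Q - 1) = 1" unfolding Q_def by (rule pc[OF w0])
  have small: "Q - 1 \<le> d" if wd: "w ^ d = 1" and d0: "d > 0" for d
  proof -
    have "UNIV - {0} \<subseteq> (\<lambda>i. w ^ i) ` {..<d}"
    proof
      fix x :: 'a assume "x \<in> UNIV - {0}"
      hence "x \<noteq> 0" by simp
      then obtain i where xi: "x = w ^ i" using w by blast
      have "w ^ i = w ^ (d * (i div d)) * w ^ (i mod d)" by (simp flip: power_add)
      also have "\<dots> = w ^ (i mod d)" by (simp add: power_mult wd)
      finally have "x = w ^ (i mod d)" using xi by simp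
      moreover have "i mod d < d" using d0 by simp
      ultimately show "x \<in> (\<lambda>i. w ^ i) ` {..<d}" by blast
    qed
    hence "card (UNIV - {0::'a}) \<le> card ((\<lambda>i. w ^ i) ` {..<d})" by (intro card_mono) auto
    also have "\<dots> \<le> d" using card_image_le[of "{..<d}" "\<lambda>i. w ^ i"] by simp
    finally have "card (UNIV - {0::'a}) \<le> d" .
    moreover have "card (UNIV - {0::'a}) = Q - 1" unfolding Q_def by (simp add: card_Diff_singleton)
    ultimately show ?thesis by simp
  qed
  have "w ^ n = 1 \<longleftrightarrow> (Q - 1) dvd n" for n
  proof
    assume wn: "w ^ n = 1"
    have "w ^ n = w ^ ((Q - 1) * (n div (Q - 1))) * w ^ (n mod (Q - 1))" by (simp flip: power_add)
    also have "\<dots> = w ^ (n mod (Q - 1))" by (simp add: power_mult wQ[simplified])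
    finally have wm: "w ^ (n mod (Q - 1)) = 1" using wn by simp
    have "n mod (Q - 1) < Q - 1" using Q2 by simp
    hence "\<not> (n mod (Q - 1) > 0)" using small[OF wm] by linarith
    thus "(Q - 1) dvd n" by (simp add: dvd_eq_mod_eq_0)
  next
    assume "(Q - 1) dvd n"
    then obtain c where "n = (Q - 1) * c" by auto
    thus "w ^ n = 1" by (simp add: power_mult wQ[simplified])
  qed
  thus ?thesis unfolding Q_def by blast
qed

lemma primitive_exists:
  "\<exists>w::'a::{finite,field}. w \<noteq> 0 \<and> (\<forall>x. x \<noteq> 0 \<longrightarrow> (\<exists>i. x = w ^ i)) \<and>
      (\<forall>n. w ^ n = 1 \<longleftrightarrow> (card (UNIV :: 'a set) - 1) dvd n)"
proof -
  obtain w :: 'a where w: "w \<noteq> 0" "\<forall>x. x \<noteq> 0 \<longrightarrow> (\<exists>i. x = w ^ i)" using exists_generator by blast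
  show ?thesis using w prim_aux[OF w(2) w(1) power_card_minus_1] by blast
qed


interpretation vs: vector_space "vscale :: 'a::field \<Rightarrow> (nat \<Rightarrow> 'a) \<Rightarrow> (nat \<Rightarrow> 'a)"
  by (rule vs_vscale)

definition ev :: "nat \<Rightarrow> (nat \<Rightarrow> 'a::field) \<Rightarrow> (nat \<Rightarrow> 'a) \<Rightarrow> 'a poly \<Rightarrow> (nat \<Rightarrow> 'a)" where
  "ev N a v f = (\<lambda>i. if i < N then v i * poly f (a i) else 0)"

definition grs :: "nat \<Rightarrow> nat \<Rightarrow> (nat \<Rightarrow> 'a::field) \<Rightarrow> (nat \<Rightarrow> 'a) \<Rightarrow> (nat \<Rightarrow> 'a) set" where
  "grs N k a v = ev N a v ` {f. degree f < k}"

lemma ev_add: "ev N a v (f + g) = ev N a v f + ev N a v g"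
  by (auto simp: ev_def fun_eq_iff algebra_simps)
lemma ev_smult: "ev N a v (smult c f) = vscale c (ev N a v f)"
  by (auto simp: ev_def fun_eq_iff vscale_def algebra_simps)
lemma ev_0: "ev N a v 0 = 0"
  by (auto simp: ev_def fun_eq_iff)
lemma ev_sum: "ev N a v (sum f A) = sum (\<lambda>x. ev N a v (f x)) A"
  by (induction A rule: infinite_finite_induct) (auto simp: ev_0 ev_add)

lemma grs_subspace: "k \<ge> 1 \<Longrightarrow> vs.subspace (grs N k a v)"
proof (rule vs.subspaceI)
  assume "k \<ge> 1"
  thus "0 \<in> grs N k a v" unfolding grs_def by (auto intro!: image_eqI[of _ _ 0] simp: ev_0)
next
  fix x y assume "x \<in> grs N k a v" "y \<in> grs N k a v"
  then obtain f g where "x = ev N a v f" "y = ev N a v g" "degree f < k" "degree g < k"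
    by (auto simp: grs_def)
  thus "x + y \<in> grs N k a v" unfolding grs_def
    by (intro image_eqI[of _ _ "f+g"]) (auto simp: ev_add intro: le_less_trans[OF degree_add_le_max])
next
  fix c x assume "x \<in> grs N k a v"
  then obtain f where "x = ev N a v f" "degree f < k" by (auto simp: grs_def)
  thus "vscale c x \<in> grs N k a v" unfolding grs_def
    by (intro image_eqI[of _ _ "smult c f"]) (auto simp: ev_smult intro: le_less_trans[OF degree_smult_le])
qed

lemma grs_fn: "grs N k a v \<subseteq> fn_space N"
  by (auto simp: grs_def ev_def fn_space_def)

lemma grs_linear: "k \<ge> 1 \<Longrightarrow> linear_code N (grs N k a v)"
  using grs_subspace[of k N a v] grs_fn[of N k a v] by (simp add: linear_code_def)

lemma dual_subspace: "vs.subspace (dual_code N C)"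
proof (rule vs.subspaceI)
  show "0 \<in> dual_code N C" by (auto simp: dual_code_def fn_space_def)
next
  fix x y assume "x \<in> dual_code N C" "y \<in> dual_code N C"
  thus "x + y \<in> dual_code N C"
    by (auto simp: dual_code_def fn_space_def algebra_simps sum.distrib)
next
  fix c x assume "x \<in> dual_code N C"
  thus "vscale c x \<in> dual_code N C"
    by (auto simp: dual_code_def fn_space_def vscale_def mult.assoc simp flip: sum_distrib_left)
qed

definition bv :: "nat \<Rightarrow> (nat \<Rightarrow> 'a::field) \<Rightarrow> (nat \<Rightarrow> 'a) \<Rightarrow> nat \<Rightarrow> nat \<Rightarrow> 'a" where
  "bv N a v j = ev N a v (monom 1 j)"

context
  fixes N :: nat and a v :: "nat \<Rightarrow> 'a::field"
  assumes inj: "inj_on a {..<N}" and vnz: "\<And>i. i < N \<Longrightarrow> v i \<noteq> 0"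
begin

lemma ev_eq_0: assumes "degree f < N" "ev N a v f = 0" shows "f = 0"
proof (rule poly_eqI_degree[of "a ` {..<N}"])
  fix x assume "x \<in> a ` {..<N}"
  then obtain i where "i < N" "x = a i" by auto
  with assms(2) have "v i * poly f (a i) = 0" by (auto simp: ev_def fun_eq_iff dest: spec[of _ i])
  with vnz \<open>i < N\<close> \<open>x = a i\<close> show "poly f x = poly 0 x" by auto
qed (use assms inj in \<open>auto simp: card_image\<close>)

lemma wt_ev: assumes "f \<noteq> 0"
  shows "hamming_wt N (ev N a v f) = N - card {i. i < N \<and> poly f (a i) = 0}"
    and "card {i. i < N \<and> poly f (a i) = 0} \<le> degree f"
proof -
  have e: "{i. i < N \<and> ev N a v f i \<noteq> 0} = {..<N} - {i. i < N \<and> poly f (a i) = 0}"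
    using vnz by (auto simp: ev_def)
  show "hamming_wt N (ev N a v f) = N - card {i. i < N \<and> poly f (a i) = 0}"
    unfolding hamming_wt_def e by (subst card_Diff_subset) auto
  have "card {i. i < N \<and> poly f (a i) = 0} = card (a ` {i. i < N \<and> poly f (a i) = 0})"
    by (rule card_image[symmetric]) (rule inj_on_subset[OF inj], auto)
  also have "\<dots> \<le> card {x. poly f x = 0}"
    by (intro card_mono poly_roots_finite assms) auto
  also have "\<dots> \<le> degree f" by (rule card_poly_roots_bound[OF assms])
  finally show "card {i. i < N \<and> poly f (a i) = 0} \<le> degree f" .
qed


lemma grs_span: assumes "k \<ge> 1" shows "grs N k a v = vs.span (bv N a v ` {..<k})"
proof (rule vs.span_subspace[symmetric])
  show "bv N a v ` {..<k} \<subseteq> grs N k a v"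
    by (auto simp: bv_def grs_def degree_monom_eq)
  show "vs.subspace (grs N k a v)" using grs_subspace assms .
  show "grs N k a v \<subseteq> vs.span (bv N a v ` {..<k})"
  proof
    fix x assume "x \<in> grs N k a v"
    then obtain f where f: "x = ev N a v f" "degree f < k" by (auto simp: grs_def)
    have "f = (\<Sum>j<k. smult (coeff f j) (monom 1 j))"
    proof (rule poly_eqI)
      fix n show "coeff f n = coeff (\<Sum>j<k. smult (coeff f j) (monom 1 j)) n"
        using f(2) by (auto simp: coeff_sum coeff_monom coeff_eq_0 if_distrib cong: if_cong)
    qed
    hence "ev N a v f = ev N a v (\<Sum>j<k. smult (coeff f j) (monom 1 j))" by simp
    also have "\<dots> = (\<Sum>j<k. vscale (coeff f j) (bv N a v j))" unfolding ev_sum bv_def ev_smult ..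
    finally have "x = (\<Sum>j<k. vscale (coeff f j) (bv N a v j))" using f(1) by simp
    thus "x \<in> vs.span (bv N a v ` {..<k})"
      by (simp only:) (rule vs.span_sum, rule vs.span_scale, rule vs.span_base, auto)
  qed
qed

end


lemma ev_diff: "ev N a v (f - g) = ev N a v f - ev N a v g"
  by (auto simp: ev_def fun_eq_iff algebra_simps)

definition Pd :: "nat \<Rightarrow> (nat \<Rightarrow> 'a::field) \<Rightarrow> 'a \<Rightarrow> 'a" where
  "Pd N a x = (\<Prod>y\<in>a ` {..<N} - {x}. x - y)"

context
  fixes N :: nat and a v :: "nat \<Rightarrow> 'a::field"
  assumes inj: "inj_on a {..<N}" and vnz: "\<And>i. i < N \<Longrightarrow> v i \<noteq> 0"
begin

lemma ev_eq_0': "degree f < N \<Longrightarrow> ev N a v f = 0 \<Longrightarrow> f = 0"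
  using ev_eq_0[where N=N and a=a and v=v and f=f] inj vnz by blast
lemma wt_ev': "f \<noteq> 0 \<Longrightarrow> hamming_wt N (ev N a v f) = N - card {i. i < N \<and> poly f (a i) = 0}"
    "f \<noteq> 0 \<Longrightarrow> card {i. i < N \<and> poly f (a i) = 0} \<le> degree f"
  using wt_ev[where N=N and a=a and v=v and f=f] inj vnz by blast+
lemma grs_span': "k \<ge> 1 \<Longrightarrow> grs N k a v = vs.span (bv N a v ` {..<k})"
  using grs_span[where N=N and a=a and v=v and k=k] inj vnz by blast

lemma bv_inj: assumes "k \<le> N" shows "inj_on (bv N a v) {..<k}"
proof
  fix i j assume ij: "i \<in> {..<k}" "j \<in> {..<k}" "bv N a v i = bv N a v j"
  have "ev N a v (monom 1 i - monom 1 j) = 0" using ij(3) by (simp add: bv_def ev_diff)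
  moreover have "degree (monom (1::'a) i - monom 1 j) < N"
    using ij assms by (intro le_less_trans[OF degree_diff_le_max]) (auto simp: degree_monom_eq)
  ultimately have "monom (1::'a) i - monom 1 j = 0" using ev_eq_0' by blast
  hence "monom (1::'a) i = monom 1 j" by simp
  hence "coeff (monom (1::'a) i) i = coeff (monom 1 j) i" by simp
  thus "i = j" by (auto simp: coeff_monom split: if_splits)
qed

lemma bv_indep: assumes "k \<le> N" "1 \<le> k" shows "vs.independent (bv N a v ` {..<k})"
proof
  assume "vs.dependent (bv N a v ` {..<k})"
  then obtain u where u: "\<exists>x\<in>bv N a v ` {..<k}. u x \<noteq> 0"
      "(\<Sum>x\<in>bv N a v ` {..<k}. vscale (u x) x) = 0"
    by (auto simp: vs.dependent_finite)
  define F where "F = (\<Sum>j<k. smult (u (bv N a v j)) (monom 1 j))"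
  have "ev N a v F = (\<Sum>j<k. vscale (u (bv N a v j)) (bv N a v j))"
    unfolding F_def ev_sum ev_smult bv_def ..
  also have "\<dots> = 0" using u(2) by (simp add: sum.reindex[OF bv_inj[OF assms(1)]])
  finally have "ev N a v F = 0" .
  moreover have "degree F < N"
    unfolding F_def using assms
    by (intro degree_sum_less) (auto intro: le_less_trans[OF degree_smult_le] simp: degree_monom_eq)
  ultimately have "F = 0" using ev_eq_0' by blast
  from u(1) obtain j where j: "j < k" "u (bv N a v j) \<noteq> 0" by auto
  have "coeff F j = u (bv N a v j)"
    unfolding F_def using j(1) by (simp add: coeff_sum coeff_monom if_distrib[of "\<lambda>x. _ * x"] cong: if_cong)
  with \<open>F = 0\<close> j(2) show False by simp
qed

lemma grs_dim: assumes "1 \<le> k" "k \<le> N" shows "code_dim (grs N k a v) = k"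
  unfolding code_dim_def grs_span'[OF assms(1)]
  by (simp add: vs.dim_eq_card_independent[OF bv_indep[OF assms(2) assms(1)]] card_image[OF bv_inj[OF assms(2)]])

lemma grs_mds: assumes "1 \<le> k" "k \<le> N" shows "min_dist N (grs N k a v) = N - k + 1"
proof -
  define f0 :: "'a poly" where "f0 = (\<Prod>j<k-1. [:-a j, 1:])"
  have f0nz: "f0 \<noteq> 0" unfolding f0_def by (simp add: prod_zero_iff)
  have degf0: "degree f0 = k - 1" unfolding f0_def by (subst degree_prod_sum_eq) auto
  have zs: "{i. i < N \<and> poly f0 (a i) = 0} = {..<k-1}"
  proof -
    have "poly f0 (a i) = 0 \<longleftrightarrow> i < k - 1" if "i < N" for i
    proof -
      have "poly f0 (a i) = 0 \<longleftrightarrow> (\<exists>j<k-1. a i = a j)" by (auto simp: f0_def poly_prod prod_zero_iff)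
      also have "\<dots> \<longleftrightarrow> i < k - 1"
        using inj that assms by (auto dest: inj_onD)
      finally show ?thesis .
    qed
    thus ?thesis using assms by auto
  qed
  have "degree f0 < N" using degf0 assms by linarith
  hence "ev N a v f0 \<noteq> 0"
    using ev_eq_0'[of f0] f0nz by auto
  moreover have "ev N a v f0 \<in> grs N k a v" using degf0 assms by (auto simp: grs_def)
  moreover have "hamming_wt N (ev N a v f0) = N - k + 1"
    using wt_ev'(1)[OF f0nz] zs assms by simp
  ultimately have mem: "N - k + 1 \<in> {hamming_wt N c |c. c \<in> grs N k a v \<and> c \<noteq> 0}" by force
  have lb: "N - k + 1 \<le> x" if "x \<in> {hamming_wt N c |c. c \<in> grs N k a v \<and> c \<noteq> 0}" for x
  proof -
    from that obtain f where f: "x = hamming_wt N (ev N a v f)" "degree f < k" "ev N a v f \<noteq> 0"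
      by (auto simp: grs_def)
    have "f \<noteq> 0" using f(3) by (auto simp: ev_0)
    from wt_ev'[OF this] f(2) assms show "N - k + 1 \<le> x" unfolding f(1) by linarith
  qed
  show ?thesis unfolding min_dist_def by (rule cInf_eq_minimum[OF mem lb])
qed

lemma ev_orth:
  assumes sq: "\<And>i. i < N \<Longrightarrow> v i ^ 2 = lam / Pd N a (a i)"
    and deg: "degree f + degree g + 2 \<le> N"
  shows "(\<Sum>i<N. ev N a v f i * ev N a v g i) = 0"
proof -
  have "(\<Sum>i<N. ev N a v f i * ev N a v g i) = (\<Sum>i<N. lam * (poly (f*g) (a i) / Pd N a (a i)))"
  proof (intro sum.cong refl)
    fix i assume "i \<in> {..<N}"
    hence "v i ^ 2 = lam / Pd N a (a i)" using sq by auto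
    hence h: "v i * v i = lam / Pd N a (a i)" by (simp add: power2_eq_square)
    have "v i * poly f (a i) * (v i * poly g (a i)) = (v i * v i) * poly (f*g) (a i)"
      by (simp add: algebra_simps)
    also have "\<dots> = (lam / Pd N a (a i)) * poly (f*g) (a i)" by (simp only: h)
    finally have "v i * poly f (a i) * (v i * poly g (a i)) = (lam / Pd N a (a i)) * poly (f*g) (a i)" .
    thus "ev N a v f i * ev N a v g i = lam * (poly (f*g) (a i) / Pd N a (a i))"
      using \<open>i \<in> {..<N}\<close> by (simp add: ev_def)
  qed
  also have "\<dots> = lam * (\<Sum>x\<in>a ` {..<N}. poly (f*g) x / Pd N a x)"
    by (simp add: sum_distrib_left sum.reindex[OF inj])
  also have "(\<Sum>x\<in>a ` {..<N}. poly (f*g) x / Pd N a x) = 0"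
    unfolding Pd_def
    by (rule lagrange_sum_zero) (use deg inj degree_mult_le[of f g] in \<open>auto simp: card_image\<close>)
  finally show ?thesis by simp
qed

lemma grs_orth:
  assumes sq: "\<And>i. i < N \<Longrightarrow> v i ^ 2 = lam / Pd N a (a i)"
    and kk: "1 \<le> k" "k + k' \<le> N"
  shows "grs N k' a v \<subseteq> dual_code N (grs N k a v)"
proof
  fix x assume "x \<in> grs N k' a v"
  then obtain g where g: "x = ev N a v g" "degree g < k'" by (auto simp: grs_def)
  show "x \<in> dual_code N (grs N k a v)"
    unfolding dual_code_def
  proof (intro CollectI conjI ballI)
    show "x \<in> fn_space N" using g by (auto simp: ev_def fn_space_def)
    fix c assume "c \<in> grs N k a v"
    then obtain f where f: "c = ev N a v f" "degree f < k" by (auto simp: grs_def)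
    have "(\<Sum>i<N. ev N a v g i * ev N a v f i) = 0"
      by (rule ev_orth[OF sq]) (use f g kk in auto)
    thus "(\<Sum>i<N. x i * c i) = 0" using f g by simp
  qed
qed

end


lemma sum_fun_app: "(\<Sum>i\<in>I. F i) j = (\<Sum>i\<in>I. F i j)"
  by (induction I rule: infinite_finite_induct) (auto simp: plus_fun_def zero_fun_def)

definition unitv :: "nat \<Rightarrow> nat \<Rightarrow> 'a::field" where "unitv i = (\<lambda>j. if j = i then 1 else 0)"

lemma expand_unitv:
  fixes x :: "nat \<Rightarrow> 'a::field"
  assumes "finite I" "\<And>j. j \<notin> I \<Longrightarrow> x j = 0"
  shows "x = (\<Sum>i\<in>I. vscale (x i) (unitv i))"
proof
  fix j
  show "x j = (\<Sum>i\<in>I. vscale (x i) (unitv i)) j"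
    unfolding sum_fun_app using assms
    by (cases "j \<in> I") (auto simp: vscale_def unitv_def if_distrib[of "\<lambda>y. _ * y"] cong: if_cong)
qed

lemma in_span_unitv:
  fixes x :: "nat \<Rightarrow> 'a::field"
  assumes "finite I" "\<And>j. j \<notin> I \<Longrightarrow> x j = 0"
  shows "x \<in> vs.span (unitv ` I)"
proof -
  have e: "x = (\<Sum>i\<in>I. vscale (x i) (unitv i))" by (rule expand_unitv[OF assms])
  have "(\<Sum>i\<in>I. vscale (x i) (unitv i)) \<in> vs.span (unitv ` I)"
    by (rule vs.span_sum, rule vs.span_scale, rule vs.span_base, auto)
  thus ?thesis by (simp only: e[symmetric])
qed

definition proj :: "nat \<Rightarrow> (nat \<Rightarrow> 'a::field) \<Rightarrow> (nat \<Rightarrow> 'a)" where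
  "proj k x = (\<lambda>i. if k \<le> i then x i else 0)"

lemma proj_hom: "module_hom vscale vscale (proj k :: (nat \<Rightarrow> 'a::field) \<Rightarrow> _)"
  unfolding module_hom_iff module_iff_vector_space
  using vs_vscale by (auto simp: proj_def vscale_def fun_eq_iff)

context
  fixes N :: nat and a v :: "nat \<Rightarrow> 'a::field"
  assumes inj: "inj_on a {..<N}" and vnz: "\<And>i. i < N \<Longrightarrow> v i \<noteq> 0"
begin

lemma dual_proj_zero:
  assumes kN: "k \<le> N" and x: "x \<in> dual_code N (grs N k a v)" and px: "proj k x = 0"
  shows "x = 0"
proof
  fix i0 show "x i0 = 0 i0"
  proof (cases "i0 < k")
    case False
    thus ?thesis using px by (auto simp: proj_def fun_eq_iff dest: spec[of _ i0])
  next
    case True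
    define f :: "'a poly" where "f = (\<Prod>j\<in>{..<k}-{i0}. [:-a j, 1:])"
    have degf: "degree f = k - 1" unfolding f_def using True by (subst degree_prod_sum_eq) auto
    hence "ev N a v f \<in> grs N k a v" using True by (auto simp: grs_def)
    hence s0: "(\<Sum>i<N. x i * ev N a v f i) = 0" using x by (auto simp: dual_code_def)
    have xz: "x i = 0" if "k \<le> i" for i using px that by (auto simp: proj_def fun_eq_iff dest: spec[of _ i])
    have pz: "poly f (a i) = 0" if "i < k" "i \<noteq> i0" for i
      using that by (auto simp: f_def poly_prod prod_zero_iff)
    have pnz: "poly f (a i0) \<noteq> 0"
      using True kN inj by (auto simp: f_def poly_prod prod_zero_iff dest: inj_onD)
    have "(\<Sum>i<N. x i * ev N a v f i) = (\<Sum>i\<in>{i0}. x i * ev N a v f i)"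
    proof (rule sum.mono_neutral_right)
      show "\<forall>i\<in>{..<N} - {i0}. x i * ev N a v f i = 0"
      proof
        fix i assume "i \<in> {..<N} - {i0}"
        thus "x i * ev N a v f i = 0"
          by (cases "k \<le> i") (auto simp: xz pz ev_def)
      qed
    qed (use True kN in auto)
    hence "x i0 * (v i0 * poly f (a i0)) = 0" using s0 True kN by (simp add: ev_def)
    thus ?thesis using pnz vnz[of i0] True kN by simp
  qed
qed

lemma dual_dim:
  assumes sq: "\<And>i. i < N \<Longrightarrow> v i ^ 2 = lam / Pd N a (a i)"
    and N: "N = 2 * k + 1" and k1: "1 \<le> k"
  shows "code_dim (dual_code N (grs N k a v)) = k + 1"
proof -
  define D where "D = dual_code N (grs N k a v)"
  obtain B where B: "B \<subseteq> D" "vs.independent B" "D \<subseteq> vs.span B" "card B = vs.dim D"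
    using vs.basis_exists by blast
  have DS: "vs.subspace D" unfolding D_def by (rule dual_subspace)
  have Dfn: "D \<subseteq> fn_space N" by (auto simp: D_def dual_code_def)
  have "B \<subseteq> vs.span (unitv ` {..<N})"
  proof
    fix x assume "x \<in> B"
    hence "x \<in> fn_space N" using B(1) Dfn by auto
    thus "x \<in> vs.span (unitv ` {..<N})" by (intro in_span_unitv) (auto simp: fn_space_def)
  qed
  moreover have "finite (unitv ` {..<N} :: (nat \<Rightarrow> 'a) set)" by simp
  ultimately have finB: "finite B" using vs.independent_span_bound[OF _ B(2)] by blast
  have "grs N (k+1) a v \<subseteq> D" unfolding D_def
    by (rule grs_orth[OF inj vnz sq]) (use N k1 in auto)
  hence "bv N a v ` {..<k+1} \<subseteq> vs.span B"
    using B(3) grs_span'[where N=N and a=a and v=v and k="k+1", OF inj vnz] vs.span_superset[of "bv N a v ` {..<k+1}"] by auto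
  hence "card (bv N a v ` {..<k+1}) \<le> card B"
    using vs.independent_span_bound[OF finB bv_indep[where N=N and a=a and v=v and k="k+1", OF inj vnz]] N by auto
  hence lo: "k + 1 \<le> vs.dim D" using card_image[OF bv_inj[where N=N and a=a and v=v and k="k+1", OF inj vnz]] N B(4) by auto
  interpret ph: module_hom vscale vscale "proj k :: (nat \<Rightarrow> 'a) \<Rightarrow> _" by (rule proj_hom)
  have injD: "inj_on (proj k) D"
  proof
    fix x y assume xy: "x \<in> D" "y \<in> D" "proj k x = proj k y"
    have "x - y \<in> D" using vs.subspace_diff[OF DS xy(1,2)] .
    moreover have "proj k (x - y) = 0"
    proof
      fix i show "proj k (x - y) i = 0 i"
        using fun_cong[OF xy(3), of i] by (auto simp: proj_def)
    qed
    ultimately have "x - y = 0" using dual_proj_zero[of k "x - y"] N unfolding D_def by auto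
    thus "x = y" by simp
  qed
  have spB: "vs.span B \<subseteq> D" using vs.span_minimal[OF B(1) DS] .
  have indP: "vs.independent (proj k ` B)"
    using ph.independent_injective_image[OF B(2) inj_on_subset[OF injD spB]] .
  have "proj k ` B \<subseteq> vs.span (unitv ` {k..<N})"
  proof
    fix y assume "y \<in> proj k ` B"
    then obtain x where "x \<in> B" "y = proj k x" by auto
    hence "x \<in> fn_space N" using B(1) Dfn by auto
    thus "y \<in> vs.span (unitv ` {k..<N})"
      using \<open>y = proj k x\<close> by (intro in_span_unitv) (auto simp: proj_def fn_space_def)
  qed
  hence "card (proj k ` B) \<le> card (unitv ` {k..<N} :: (nat \<Rightarrow> 'a) set)"
    using vs.independent_span_bound[OF _ indP] by auto
  also have "\<dots> \<le> N - k" using card_image_le[of "{k..<N}" unitv] by auto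
  finally have "card B \<le> N - k" using card_image[OF inj_on_subset[OF injD B(1)]] by simp
  hence "vs.dim D \<le> k + 1" using B(4) N by simp
  with lo show ?thesis unfolding code_dim_def D_def by simp
qed

end


lemma codes_from_set:
  fixes S :: "'a::field set"
  assumes fin: "finite S" and lam: "lam \<noteq> 0"
    and sq: "\<And>x. x \<in> S \<Longrightarrow> \<exists>w. w ^ 2 = lam / (\<Prod>y\<in>S-{x}. x - y)"
  shows "\<forall>k. 1 \<le> k \<and> 2 * k \<le> card S \<longrightarrow>
           (\<exists>C :: (nat \<Rightarrow> 'a) set. nk_code (card S) k C \<and> is_MDS (card S) C \<and> self_orthogonal (card S) C)"
    and "odd (card S) \<Longrightarrow> 3 \<le> card S \<Longrightarrow>
           (\<exists>C :: (nat \<Rightarrow> 'a) set. is_MDS (card S) C \<and> almost_self_dual (card S) C)"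
proof -
  define N where "N = card S"
  obtain a where a: "bij_betw a {..<N} S"
    using ex_bij_betw_nat_finite[OF fin] unfolding N_def by (auto simp: lessThan_atLeast0)
  have inj: "inj_on a {..<N}" using a by (auto simp: bij_betw_def)
  have img: "a ` {..<N} = S" using a by (auto simp: bij_betw_def)
  define v where "v i = (SOME w. w ^ 2 = lam / Pd N a (a i))" for i
  have Pnz: "Pd N a (a i) \<noteq> 0" if "i < N" for i
    unfolding Pd_def img using fin by (auto simp: prod_zero_iff)
  have vsq: "v i ^ 2 = lam / Pd N a (a i)" if "i < N" for i
  proof -
    have "a i \<in> S" using img that by auto
    from sq[OF this] have "\<exists>w. w ^ 2 = lam / Pd N a (a i)" unfolding Pd_def img .
    thus ?thesis unfolding v_def by (rule someI_ex)
  qed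
  have vnz: "v i \<noteq> 0" if "i < N" for i
    using vsq[OF that] Pnz[OF that] lam by auto
  show "\<forall>k. 1 \<le> k \<and> 2 * k \<le> card S \<longrightarrow>
           (\<exists>C :: (nat \<Rightarrow> 'a) set. nk_code (card S) k C \<and> is_MDS (card S) C \<and> self_orthogonal (card S) C)"
  proof (intro allI impI)
    fix k assume k: "1 \<le> k \<and> 2 * k \<le> card S"
    hence k1: "1 \<le> k" "k \<le> N" "k + k \<le> N" unfolding N_def by auto
    have lin: "linear_code N (grs N k a v)" by (rule grs_linear) (use k1 in auto)
    have dim: "code_dim (grs N k a v) = k" by (rule grs_dim[OF inj vnz k1(1,2)])
    have md: "min_dist N (grs N k a v) = N - k + 1" by (rule grs_mds[OF inj vnz k1(1,2)])
    have so: "grs N k a v \<subseteq> dual_code N (grs N k a v)"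
      by (rule grs_orth[OF inj vnz vsq k1(1,3)])
    show "\<exists>C :: (nat \<Rightarrow> 'a) set. nk_code (card S) k C \<and> is_MDS (card S) C \<and> self_orthogonal (card S) C"
      using lin dim md so unfolding N_def
      by (intro exI[of _ "grs N k a v"]) (auto simp: nk_code_def is_MDS_def self_orthogonal_def N_def)
  qed
  assume odd: "odd (card S)" and three: "3 \<le> card S"
  define k where "k = (N - 1) div 2"
  have Nk: "N = 2 * k + 1" using odd unfolding k_def N_def by presburger
  have k1: "1 \<le> k" "k \<le> N" "k + k \<le> N" using three Nk unfolding N_def by auto
  have lin: "linear_code N (grs N k a v)" by (rule grs_linear) (use k1 in auto)
  have dim: "code_dim (grs N k a v) = k" by (rule grs_dim[OF inj vnz k1(1,2)])
  have md: "min_dist N (grs N k a v) = N - k + 1" by (rule grs_mds[OF inj vnz k1(1,2)])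
  have so: "grs N k a v \<subseteq> dual_code N (grs N k a v)"
    by (rule grs_orth[OF inj vnz vsq k1(1,3)])
  have dd: "code_dim (dual_code N (grs N k a v)) = k + 1"
    by (rule dual_dim[OF inj vnz vsq Nk k1(1)])
  show "\<exists>C :: (nat \<Rightarrow> 'a) set. is_MDS (card S) C \<and> almost_self_dual (card S) C"
    using lin dim md so dd unfolding N_def
    by (intro exI[of _ "grs N k a v"]) (auto simp: is_MDS_def almost_self_dual_def N_def)
qed





lemma coset_poly:
  fixes beta zeta :: "'a::field"
  assumes inj: "inj_on (\<lambda>m. beta * zeta ^ m) {..<f}" and zf: "zeta ^ f = 1" and f0: "f > 0"
  shows "(\<Prod>m<f. [:-(beta * zeta ^ m), 1:]) = Polynomial.monom 1 f - [:beta ^ f:]"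
proof (rule poly_eqI_degree_lead_coeff[of _ f _ "(\<lambda>m. beta * zeta ^ m) ` {..<f}"])
  show "coeff (\<Prod>m<f. [:-(beta * zeta ^ m), 1:]) f = coeff (Polynomial.monom 1 f - [:beta ^ f:]) f"
  proof -
    have "lead_coeff (\<Prod>m<f. [:-(beta * zeta ^ m), 1:]) = 1" by (simp add: lead_coeff_prod)
    moreover have "degree (\<Prod>m<f. [:-(beta * zeta ^ m), 1:]) = f" by (subst degree_prod_sum_eq) auto
    ultimately show ?thesis using f0 by (cases f) auto
  qed
  show "f \<le> card ((\<lambda>m. beta * zeta ^ m) ` {..<f})" using card_image[OF inj] by simp
  show "degree (\<Prod>m<f. [:-(beta * zeta ^ m), 1:]) \<le> f" by (subst degree_prod_sum_eq) auto
  show "degree (Polynomial.monom 1 f - [:beta ^ f:]) \<le> f"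
    by (rule order.trans[OF degree_diff_le_max]) (auto simp: degree_monom_eq)
  fix z assume "z \<in> (\<lambda>m. beta * zeta ^ m) ` {..<f}"
  then obtain m where m: "m < f" "z = beta * zeta ^ m" by auto
  have "poly (\<Prod>m<f. [:-(beta * zeta ^ m), 1:]) z = 0"
    using m by (auto simp: poly_prod prod_zero_iff)
  moreover have "z ^ f = beta ^ f"
    using m zf by (simp add: power_mult_distrib flip: power_mult) (simp add: mult.commute[of m] power_mult)
  ultimately show "poly (\<Prod>m<f. [:-(beta * zeta ^ m), 1:]) z = poly (Polynomial.monom 1 f - [:beta ^ f:]) z"
    by (simp add: poly_monom)
qed

lemma coset_prod:
  fixes beta zeta :: "'a::field"
  assumes inj: "inj_on (\<lambda>m. beta * zeta ^ m) {..<f}" and zf: "zeta ^ f = 1" and f0: "f > 0"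
  shows "(\<Prod>m<f. x - beta * zeta ^ m) = x ^ f - beta ^ f"
  using arg_cong[OF coset_poly[OF assms], of "\<lambda>p. poly p x"] by (simp add: poly_prod poly_monom)

lemma coset_own:
  fixes beta zeta :: "'a::field"
  assumes inj: "inj_on (\<lambda>m. beta * zeta ^ m) {..<f}" and zf: "zeta ^ f = 1" and f0: "f > 0"
    and m0: "m0 < f"
  shows "(\<Prod>m\<in>{..<f}-{m0}. beta * zeta ^ m0 - beta * zeta ^ m) = of_nat f * (beta * zeta ^ m0) ^ (f - 1)"
proof -
  define x0 where "x0 = beta * zeta ^ m0"
  have "poly (pderiv (\<Prod>m<f. [:-(beta * zeta ^ m), 1:])) x0 = poly (pderiv (Polynomial.monom 1 f - [:beta ^ f:])) x0"
    by (simp only: coset_poly[OF assms(1-3)])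
  also have "\<dots> = of_nat f * x0 ^ (f - 1)"
    by (simp add: pderiv_diff pderiv_monom poly_monom)
  also have "pderiv (\<Prod>m<f. [:-(beta * zeta ^ m), 1:]) =
      (\<Sum>a<f. (\<Prod>m\<in>{..<f}-{a}. [:-(beta * zeta ^ m), 1:]) * pderiv [:-(beta * zeta ^ a), 1:])"
    by (rule pderiv_prod)
  also have "poly \<dots> x0 = (\<Sum>a<f. \<Prod>m\<in>{..<f}-{a}. x0 - beta * zeta ^ m)"
    by (simp add: poly_sum poly_prod pderiv_pCons)
  also have "\<dots> = (\<Sum>a\<in>{m0}. \<Prod>m\<in>{..<f}-{a}. x0 - beta * zeta ^ m)"
  proof (rule sum.mono_neutral_right)
    show "\<forall>a\<in>{..<f} - {m0}. (\<Prod>m\<in>{..<f} - {a}. x0 - beta * zeta ^ m) = 0"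
      using m0 by (auto simp: x0_def prod_zero_iff intro!: bexI[of _ m0])
  qed (use m0 in auto)
  finally show ?thesis by (simp add: x0_def)
qed


locale cs =
  fixes w :: "'a::{finite,field}" and q r e1 e2 f1 f2 g G D1 D2 K L R2 h c0 s t :: nat
  assumes card: "card (UNIV::'a set) = q" and qr: "q = r^2" and pp: "prime_power r"
    and w0: "w \<noteq> 0" and wgen: "\<forall>x. x \<noteq> 0 \<longrightarrow> (\<exists>i. x = w ^ i)"
    and word: "\<forall>n. w ^ n = 1 \<longleftrightarrow> (q - 1) dvd n"
    and E1: "q - 1 = e1 * f1" and E2: "q - 1 = e2 * f2"
    and Eg1: "e1 = g * D1" and Eg2: "e2 = g * D2" and Eg: "g = 2 * G" and Geven: "even G" and Gpos: "G > 0"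
    and Er1: "r + 1 = 2 * R2" and ER2: "R2 = D2 * K" and Er2: "r - 1 = 2 * D1 * L"
    and Eh: "h = (r - 1) * R2" and Eqh: "q - 1 = 2 * h"
    and Ec0: "e2 * (r - 1) = e1 * c0"
    and sD: "s \<le> D1" and tD: "t \<le> D2" and r3: "r \<ge> 3"
begin

lemma qpos: "q - 1 > 0"
proof -
  have "(3::nat) ^ 2 \<le> r ^ 2" using r3 by (rule power_mono) simp
  thus ?thesis using qr by simp
qed

lemma hpos: "h > 0" using qpos Eqh by simp
lemma hlt: "h < q - 1" using qpos Eqh by simp
lemma f1pos: "f1 > 0" and f2pos: "f2 > 0" and e1pos: "e1 > 0" and e2pos: "e2 > 0"
proof -
  have p1: "0 < e1 * f1" using qpos unfolding E1 .
  have p2: "0 < e2 * f2" using qpos unfolding E2 .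
  show "f1 > 0" "f2 > 0" "e1 > 0" "e2 > 0" using p1 p2 by (auto simp: nat_0_less_mult_iff)
qed
lemma D1pos: "D1 > 0" and D2pos: "D2 > 0" and gpos: "g > 0"
  using e1pos e2pos Eg1 Eg2 by (auto simp: nat_0_less_mult_iff)

lemma w_one: "(q - 1) dvd n \<Longrightarrow> w ^ n = 1" using word by blast

lemma w_mod: "w ^ n = w ^ (n mod (q - 1))"
proof -
  have "w ^ n = w ^ ((q - 1) * (n div (q - 1))) * w ^ (n mod (q - 1))" by (simp flip: power_add)
  also have "w ^ ((q - 1) * (n div (q - 1))) = 1" by (rule w_one) simp
  finally show ?thesis by simp
qed

lemma w_inj: assumes "a < q - 1" "b < q - 1" "w ^ a = w ^ b" shows "a = b"
proof -
  have *: "a = b" if ab: "a \<le> b" "a < q - 1" "b < q - 1" "w ^ a = w ^ b" for a b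
  proof -
    have "w ^ a * w ^ (b - a) = w ^ (a + (b - a))" by (simp add: power_add)
    also have "a + (b - a) = b" using ab by simp
    finally have "w ^ a * w ^ (b - a) = w ^ a * 1" using ab by simp
    hence "w ^ (b - a) = 1" using w0 by simp
    hence "(q - 1) dvd (b - a)" using word by blast
    moreover have "b - a < q - 1" using ab by linarith
    ultimately have "b - a = 0" by (cases "b - a = 0") (auto dest: dvd_imp_le)
    thus ?thesis using ab by simp
  qed
  show ?thesis using *[of a b] *[of b a] assms by (cases "a \<le> b") auto
qed

lemma w_mod_eq: "w ^ a = w ^ b \<Longrightarrow> a mod (q - 1) = b mod (q - 1)"
  using w_inj[of "a mod (q - 1)" "b mod (q - 1)"] w_mod[of a] w_mod[of b] qpos by simp

lemma w_h: "w ^ h = -1"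
proof -
  have "(w ^ h - 1) * (w ^ h + 1) = w ^ (2 * h) - 1" by (simp add: algebra_simps power_mult power2_eq_square)
  also have "w ^ (2 * h) = 1" using Eqh by (intro w_one) simp
  finally have "w ^ h = 1 \<or> w ^ h = -1" by (simp add: eq_neg_iff_add_eq_0)
  moreover have "w ^ h \<noteq> 1"
  proof
    assume "w ^ h = 1"
    hence "(q - 1) dvd h" using word by blast
    thus False using hpos hlt by (auto dest: dvd_imp_le)
  qed
  ultimately show ?thesis by blast
qed

lemma w_hc: "w ^ (h * c) = (-1) ^ c"
  by (simp add: power_mult w_h)

lemma frobd: "(x - y) ^ r = x ^ r - (y::'a) ^ r"
  using frob_diff[OF card[unfolded qr] pp] .

lemma hR: "h = (r - 1) * R2" by (rule Eh)

lemma rpos: "r - 1 > 0" using r3 by simp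

lemma good_Fr: assumes "x ^ r = x" "x \<noteq> 0" shows "x ^ h = (1::'a)"
proof -
  have rr: "r = Suc (r - 1)" using rpos by simp
  have "x ^ (r - 1) * x = x" using assms(1) by (subst (asm) rr) (simp only: power_Suc2)
  hence "x ^ (r - 1) = 1" using assms(2) by simp
  thus ?thesis by (simp add: hR power_mult)
qed

lemma L1: assumes "x ^ (r - 1) = 1" "y ^ (r - 1) = 1" "x \<noteq> y" shows "(x - y) ^ h = (1::'a)"
proof -
  have rr: "r = Suc (r - 1)" using rpos by simp
  have "x ^ r = x" using assms(1) by (subst rr) (simp only: power_Suc2, simp)
  moreover have "y ^ r = y" using assms(2) by (subst rr) (simp only: power_Suc2, simp)
  ultimately have "(x - y) ^ r = x - y" by (simp add: frobd)
  thus ?thesis using good_Fr assms(3) by simp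
qed

lemma sq_one_pow: assumes "(a::'a) ^ 2 = 1" shows "a ^ r = a"
proof -
  have "r = 2 * (R2 - 1) + 1" using Er1 r3 by linarith
  thus ?thesis using assms by (simp add: power_add power_mult)
qed

lemma L2: assumes x: "x ^ (r + 1) = 1" and y: "y ^ (r + 1) = 1" and xy: "x \<noteq> y"
  shows "(x - y) ^ h = ((-1) ^ R2 * x ^ R2 * y ^ R2 :: 'a)"
proof -
  have x0: "x \<noteq> 0" using x by auto
  have y0: "y \<noteq> 0" using y by auto
  have xr: "x ^ r * x = 1"
  proof -
    have "x ^ r * x = x ^ Suc r" by (rule power_Suc2[symmetric])
    also have "\<dots> = 1" using x by simp
    finally show ?thesis .
  qed
  have yr: "y ^ r * y = 1"
  proof -
    have "y ^ r * y = y ^ Suc r" by (rule power_Suc2[symmetric])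
    also have "\<dots> = 1" using y by simp
    finally show ?thesis .
  qed
  have "(x - y) ^ r = x ^ r - y ^ r" by (rule frobd)
  also have "\<dots> = x ^ r * (y ^ r * y) - y ^ r * (x ^ r * x)" by (simp only: xr yr mult_1_right)
  also have "\<dots> = - (x ^ r * y ^ r) * (x - y)" by (simp add: algebra_simps)
  finally have e0: "(x - y) ^ r = - (x ^ r * y ^ r) * (x - y)" .
  have rr: "r = Suc (r - 1)" using rpos by simp
  have e: "(x - y) ^ (r - 1) * (x - y) = - (x ^ r * y ^ r) * (x - y)"
    using e0 by (subst (asm) rr) (simp only: power_Suc2)
  have z: "x - y \<noteq> 0" using xy by simp
  have "((x - y) ^ (r - 1) + x ^ r * y ^ r) * (x - y) = 0" using e by (simp add: algebra_simps)
  hence "(x - y) ^ (r - 1) + x ^ r * y ^ r = 0" using z by simp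
  hence zr: "(x - y) ^ (r - 1) = - (x ^ r * y ^ r)" by (simp add: eq_neg_iff_add_eq_0)
  have xa: "(x ^ R2) ^ 2 = 1"
  proof -
    have "(x ^ R2) ^ 2 = x ^ (R2 * 2)" by (rule power_mult[symmetric])
    also have "R2 * 2 = r + 1" using Er1 by simp
    finally show ?thesis using x by simp
  qed
  have ya: "(y ^ R2) ^ 2 = 1"
  proof -
    have "(y ^ R2) ^ 2 = y ^ (R2 * 2)" by (rule power_mult[symmetric])
    also have "R2 * 2 = r + 1" using Er1 by simp
    finally show ?thesis using y by simp
  qed
  have p1: "(x - y) ^ h = (- (x ^ r * y ^ r)) ^ R2" unfolding hR power_mult zr ..
  have p2: "(- (x ^ r * y ^ r)) ^ R2 = (-1) ^ R2 * ((x ^ r) ^ R2 * (y ^ r) ^ R2)"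
    by (subst power_minus) (simp only: power_mult_distrib)
  have p3: "(x ^ r) ^ R2 = x ^ R2"
  proof -
    have "(x ^ r) ^ R2 = x ^ (r * R2)" by (rule power_mult[symmetric])
    also have "\<dots> = x ^ (R2 * r)" by (simp only: mult.commute)
    also have "\<dots> = (x ^ R2) ^ r" by (rule power_mult)
    also have "\<dots> = x ^ R2" by (rule sq_one_pow[OF xa])
    finally show ?thesis .
  qed
  have p4: "(y ^ r) ^ R2 = y ^ R2"
  proof -
    have "(y ^ r) ^ R2 = y ^ (r * R2)" by (rule power_mult[symmetric])
    also have "\<dots> = y ^ (R2 * r)" by (simp only: mult.commute)
    also have "\<dots> = (y ^ R2) ^ r" by (rule power_mult)
    also have "\<dots> = y ^ R2" by (rule sq_one_pow[OF ya])
    finally show ?thesis .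
  qed
  show ?thesis using p1 p2 p3 p4 by (simp add: mult.assoc)
qed

lemma good_sq: assumes "x \<noteq> 0" "x ^ h = 1" shows "\<exists>y. y ^ 2 = (x::'a)"
proof -
  obtain i where i: "x = w ^ i" using wgen assms(1) by blast
  have "w ^ (i * h) = 1" using assms(2) i by (simp add: power_mult)
  hence "(q - 1) dvd (i * h)" using word by blast
  hence "h * 2 dvd h * i" using Eqh by (simp add: mult.commute)
  hence "2 dvd i" using hpos by (simp add: nat_mult_dvd_cancel_disj)
  then obtain j where "i = 2 * j" by auto
  thus ?thesis using i by (intro exI[of _ "w ^ j"]) (simp add: power_mult mult.commute)
qed

lemma of_nat_frob: "(of_nat n :: 'a) ^ r = of_nat n"
proof (induction n)
  case 0 show ?case using r3 by simp
next
  case (Suc n)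
  have "(of_nat (Suc n) :: 'a) ^ r = (of_nat n + 1) ^ r" by (simp add: add.commute)
  also have "\<dots> = of_nat n ^ r + 1 ^ r" by (rule frob[OF card[unfolded qr] pp])
  finally show ?case using Suc by simp
qed

lemma of_nat_good: assumes "n dvd (q - 1)" "n > 0" shows "(of_nat n :: 'a) ^ h = 1"
proof -
  have "(of_nat n :: 'a) \<noteq> 0"
  proof
    assume n0: "(of_nat n :: 'a) = 0"
    obtain c where c: "q - 1 = n * c" using assms(1) by auto
    have "(of_nat (q - 1) :: 'a) = 0" using n0 c by simp
    moreover have "(of_nat q :: 'a) = 0" using of_nat_card_UNIV_zero[where 'a='a] card by simp
    moreover have "(of_nat q :: 'a) = of_nat (q - 1) + 1"
    proof -
      have "q = Suc (q - 1)" using qpos by simp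
      hence "(of_nat q :: 'a) = of_nat (Suc (q - 1))" by (rule arg_cong)
      thus ?thesis by simp
    qed
    ultimately show False by simp
  qed
  thus ?thesis using good_Fr of_nat_frob by blast
qed


end

lemma prod_remove_union:
  assumes fin: "finite I" "\<And>i. i \<in> I \<Longrightarrow> finite (S i)"
    and disj: "\<And>i j. i \<in> I \<Longrightarrow> j \<in> I \<Longrightarrow> i \<noteq> j \<Longrightarrow> S i \<inter> S j = {}"
    and i0: "i0 \<in> I" and x: "x \<in> S i0"
  shows "(\<Prod>y\<in>(\<Union>i\<in>I. S i) - {x}. F y) = (\<Prod>y\<in>S i0 - {x}. F y) * (\<Prod>i\<in>I-{i0}. \<Prod>y\<in>S i. F y)"
proof -
  have eq: "(\<Union>i\<in>I. S i) - {x} = (S i0 - {x}) \<union> (\<Union>i\<in>I-{i0}. S i)"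
    using disj i0 x by blast
  have d: "(S i0 - {x}) \<inter> (\<Union>i\<in>I-{i0}. S i) = {}" using disj i0 by blast
  have "(\<Prod>y\<in>(\<Union>i\<in>I. S i) - {x}. F y) = (\<Prod>y\<in>S i0 - {x}. F y) * (\<Prod>y\<in>(\<Union>i\<in>I-{i0}. S i). F y)"
    unfolding eq using fin i0 d by (intro prod.union_disjoint) auto
  also have "(\<Prod>y\<in>(\<Union>i\<in>I-{i0}. S i). F y) = (\<Prod>i\<in>I-{i0}. \<Prod>y\<in>S i. F y)"
    using fin disj by (intro prod.UNION_disjoint) auto
  finally show ?thesis .
qed

lemma prod_union_fam:
  assumes fin: "finite I" "\<And>i. i \<in> I \<Longrightarrow> finite (S i)"
    and disj: "\<And>i j. i \<in> I \<Longrightarrow> j \<in> I \<Longrightarrow> i \<noteq> j \<Longrightarrow> S i \<inter> S j = {}"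
  shows "(\<Prod>y\<in>(\<Union>i\<in>I. S i). F y) = (\<Prod>i\<in>I. \<Prod>y\<in>S i. F y)"
  using fin disj by (intro prod.UNION_disjoint) auto

context cs
begin

lemma Gg: "G < g" using Eg Gpos by simp

lemma exp1_lt: assumes "i < D1" "m < f1" shows "g * i + e1 * m < q - 1"
proof -
  have "g * i < e1" using assms(1) gpos Eg1 by simp
  moreover have "e1 * m + e1 \<le> e1 * f1" using assms(2) mult_le_mono2[of "Suc m" f1 e1] by simp
  ultimately show ?thesis using E1 by linarith
qed

lemma exp2_lt: assumes "j < D2" "m < f2" shows "G + g * j + e2 * m < q - 1"
proof -
  have "G + g * j < g * (Suc j)" using Gg by simp
  also have "g * Suc j \<le> e2" using assms(1) Eg2 mult_le_mono2[of "Suc j" D2 g] by simp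
  finally have "G + g * j < e2" .
  moreover have "e2 * m + e2 \<le> e2 * f2" using assms(2) mult_le_mono2[of "Suc m" f2 e2] by simp
  ultimately show ?thesis using E2 by linarith
qed

lemma exp1_inj: assumes "i < D1" "i' < D1" "g * i + e1 * m = g * i' + e1 * m'"
  shows "i = i' \<and> m = m'"
proof -
  have a: "g * i < e1" "g * i' < e1" using assms(1,2) gpos Eg1 by simp_all
  have "(g * i + e1 * m) mod e1 = g * i" "(g * i' + e1 * m') mod e1 = g * i'" using a by simp_all
  hence "g * i = g * i'" using assms(3) by simp
  hence "i = i'" using gpos by simp
  moreover have "m = m'" using assms(3) \<open>g * i = g * i'\<close> e1pos by simp
  ultimately show ?thesis by simp
qed

lemma exp2_inj: assumes "j < D2" "j' < D2" "G + g * j + e2 * m = G + g * j' + e2 * m'"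
  shows "j = j' \<and> m = m'"
proof -
  have "g * j < e2" "g * j' < e2" using assms(1,2) gpos Eg2 by simp_all
  hence a: "g * j < e2" "g * j' < e2" by simp_all
  have "g * j + e2 * m = g * j' + e2 * m'" using assms(3) by simp
  hence "(g * j + e2 * m) mod e2 = (g * j' + e2 * m') mod e2" by simp
  hence "g * j = g * j'" using a by simp
  hence "j = j'" using gpos by simp
  moreover have "m = m'" using assms(3) \<open>g * j = g * j'\<close> e2pos by simp
  ultimately show ?thesis by simp
qed

lemma exp12_ne: "g * a + e1 * b \<noteq> G + g * c + e2 * d"
proof
  assume h: "g * a + e1 * b = G + g * c + e2 * d"
  have "G * (2 * (a + D1 * b)) = G * (2 * (c + D2 * d) + 1)"
    using h unfolding Eg1 Eg2 Eg by (simp add: algebra_simps)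
  hence "2 * (a + D1 * b) = 2 * (c + D2 * d) + 1" using Gpos by (subst (asm) mult_left_cancel) auto
  thus False by presburger
qed

definition b1 :: "nat \<Rightarrow> nat \<Rightarrow> 'a" where "b1 i m = w ^ (g * i) * (w ^ e1) ^ m"
definition b2 :: "nat \<Rightarrow> nat \<Rightarrow> 'a" where "b2 j m = w ^ (G + g * j) * (w ^ e2) ^ m"

lemma b1_exp: "b1 i m = w ^ (g * i + e1 * m)" by (simp add: b1_def power_add power_mult)
lemma b2_exp: "b2 j m = w ^ (G + g * j + e2 * m)" by (simp add: b2_def power_add power_mult)

lemma b1_inj: "i < D1 \<Longrightarrow> i' < D1 \<Longrightarrow> m < f1 \<Longrightarrow> m' < f1 \<Longrightarrow> b1 i m = b1 i' m' \<Longrightarrow> i = i' \<and> m = m'"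
  unfolding b1_exp by (rule exp1_inj, assumption+) (rule w_inj[OF exp1_lt exp1_lt], assumption+)

lemma b2_inj: "j < D2 \<Longrightarrow> j' < D2 \<Longrightarrow> m < f2 \<Longrightarrow> m' < f2 \<Longrightarrow> b2 j m = b2 j' m' \<Longrightarrow> j = j' \<and> m = m'"
  unfolding b2_exp by (rule exp2_inj, assumption+) (rule w_inj[OF exp2_lt exp2_lt], assumption+)

lemma b12_ne: "i < D1 \<Longrightarrow> m < f1 \<Longrightarrow> j < D2 \<Longrightarrow> m' < f2 \<Longrightarrow> b1 i m \<noteq> b2 j m'"
  unfolding b1_exp b2_exp using w_inj[OF exp1_lt exp2_lt] exp12_ne by blast

lemma b1_nz: "b1 i m \<noteq> 0" by (simp add: b1_def w0)
lemma b2_nz: "b2 j m \<noteq> 0" by (simp add: b2_def w0)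

definition C1 :: "nat \<Rightarrow> 'a set" where "C1 i = b1 i ` {..<f1}"
definition C2 :: "nat \<Rightarrow> 'a set" where "C2 j = b2 j ` {..<f2}"
definition A1 :: "'a set" where "A1 = (\<Union>i<s. C1 i)"
definition A2 :: "'a set" where "A2 = (\<Union>j<t. C2 j)"
definition AA :: "'a set" where "AA = A1 \<union> A2"

lemma C1_disj: "i < s \<Longrightarrow> i' < s \<Longrightarrow> i \<noteq> i' \<Longrightarrow> C1 i \<inter> C1 i' = {}"
  using b1_inj sD by (fastforce simp: C1_def)
lemma C2_disj: "j < t \<Longrightarrow> j' < t \<Longrightarrow> j \<noteq> j' \<Longrightarrow> C2 j \<inter> C2 j' = {}"
  using b2_inj tD by (fastforce simp: C2_def)
lemma A12_disj: "A1 \<inter> A2 = {}"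
  using b12_ne sD tD by (fastforce simp: A1_def A2_def C1_def C2_def)

lemma b1_inj_on: "i < D1 \<Longrightarrow> inj_on (b1 i) {..<f1}"
  using b1_inj by (auto simp: inj_on_def)
lemma b2_inj_on: "j < D2 \<Longrightarrow> inj_on (b2 j) {..<f2}"
  using b2_inj by (auto simp: inj_on_def)

lemma card_A1: "card A1 = s * f1"
proof -
  have "A1 = (\<lambda>(i, m). b1 i m) ` ({..<s} \<times> {..<f1})" by (auto simp: A1_def C1_def)
  moreover have "inj_on (\<lambda>(i, m). b1 i m) ({..<s} \<times> {..<f1})"
  proof (rule inj_onI)
    fix p p' assume p: "p \<in> {..<s} \<times> {..<f1}" "p' \<in> {..<s} \<times> {..<f1}"
      "(\<lambda>(i, m). b1 i m) p = (\<lambda>(i, m). b1 i m) p'"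
    obtain i m i' m' where "p = (i, m)" "p' = (i', m')" by (cases p, cases p') auto
    thus "p = p'" using p b1_inj[of i i' m m'] sD by auto
  qed
  ultimately show ?thesis by (simp add: card_image card_cartesian_product)
qed

lemma card_A2: "card A2 = t * f2"
proof -
  have "A2 = (\<lambda>(j, m). b2 j m) ` ({..<t} \<times> {..<f2})" by (auto simp: A2_def C2_def)
  moreover have "inj_on (\<lambda>(j, m). b2 j m) ({..<t} \<times> {..<f2})"
  proof (rule inj_onI)
    fix p p' assume p: "p \<in> {..<t} \<times> {..<f2}" "p' \<in> {..<t} \<times> {..<f2}"
      "(\<lambda>(j, m). b2 j m) p = (\<lambda>(j, m). b2 j m) p'"
    obtain j m j' m' where "p = (j, m)" "p' = (j', m')" by (cases p, cases p') auto
    thus "p = p'" using p b2_inj[of j j' m m'] tD by auto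
  qed
  ultimately show ?thesis by (simp add: card_image card_cartesian_product)
qed

lemma fin_AA: "finite AA" by (simp add: AA_def A1_def A2_def C1_def C2_def)

lemma card_AA: "card AA = s * f1 + t * f2"
  unfolding AA_def using A12_disj card_A1 card_A2
  by (subst card_Un_disjoint) (auto simp: A1_def A2_def C1_def C2_def)

lemma zero_notin: "0 \<notin> AA"
  using b1_nz b2_nz by (auto simp: AA_def A1_def A2_def C1_def C2_def)


definition PP :: "'a \<Rightarrow> 'a" where "PP x = (\<Prod>y\<in>AA - {x}. x - y)"

lemma wq1: "w ^ (q - 1) = 1" by (rule w_one) simp

lemma b1_fun: "b1 i = (\<lambda>m. w ^ (g * i) * (w ^ e1) ^ m)" by (simp add: fun_eq_iff b1_def)
lemma b2_fun: "b2 j = (\<lambda>m. w ^ (G + g * j) * (w ^ e2) ^ m)" by (simp add: fun_eq_iff b2_def)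
lemma z1: "(w ^ e1) ^ f1 = 1" using wq1 E1 by (simp flip: power_mult)
lemma z2: "(w ^ e2) ^ f2 = 1" using wq1 E2 by (simp flip: power_mult)

lemma prodC1: "i < s \<Longrightarrow> (\<Prod>y\<in>C1 i. x - y) = x ^ f1 - (w ^ (g * i)) ^ f1"
  unfolding C1_def using sD b1_inj_on[of i]
  by (subst prod.reindex) (auto simp: b1_fun intro!: coset_prod z1 f1pos)

lemma prodC2: "j < t \<Longrightarrow> (\<Prod>y\<in>C2 j. x - y) = x ^ f2 - (w ^ (G + g * j)) ^ f2"
  unfolding C2_def using tD b2_inj_on[of j]
  by (subst prod.reindex) (auto simp: b2_fun intro!: coset_prod z2 f2pos)

lemma ownC1: assumes "i0 < s" "m0 < f1"
  shows "(\<Prod>y\<in>C1 i0 - {b1 i0 m0}. b1 i0 m0 - y) = of_nat f1 * (b1 i0 m0) ^ (f1 - 1)"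
proof -
  have inj: "inj_on (b1 i0) {..<f1}" using assms sD b1_inj_on by simp
  have "C1 i0 - {b1 i0 m0} = b1 i0 ` ({..<f1} - {m0})"
    unfolding C1_def using inj assms by (auto simp: inj_on_def)
  hence "(\<Prod>y\<in>C1 i0 - {b1 i0 m0}. b1 i0 m0 - y) = (\<Prod>m\<in>{..<f1} - {m0}. b1 i0 m0 - b1 i0 m)"
    using inj by (simp add: prod.reindex inj_on_subset[OF inj])
  also have "\<dots> = of_nat f1 * (b1 i0 m0) ^ (f1 - 1)"
    using coset_own[of "w ^ (g * i0)" "w ^ e1" f1 m0] inj z1 f1pos assms
    by (simp add: b1_fun)
  finally show ?thesis .
qed

lemma ownC2: assumes "j0 < t" "m0 < f2"
  shows "(\<Prod>y\<in>C2 j0 - {b2 j0 m0}. b2 j0 m0 - y) = of_nat f2 * (b2 j0 m0) ^ (f2 - 1)"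
proof -
  have inj: "inj_on (b2 j0) {..<f2}" using assms tD b2_inj_on by simp
  have "C2 j0 - {b2 j0 m0} = b2 j0 ` ({..<f2} - {m0})"
    unfolding C2_def using inj assms by (auto simp: inj_on_def)
  hence "(\<Prod>y\<in>C2 j0 - {b2 j0 m0}. b2 j0 m0 - y) = (\<Prod>m\<in>{..<f2} - {m0}. b2 j0 m0 - b2 j0 m)"
    using inj by (simp add: prod.reindex inj_on_subset[OF inj])
  also have "\<dots> = of_nat f2 * (b2 j0 m0) ^ (f2 - 1)"
    using coset_own[of "w ^ (G + g * j0)" "w ^ e2" f2 m0] inj z2 f2pos assms
    by (simp add: b2_fun)
  finally show ?thesis .
qed

lemma fin_C1: "finite (C1 i)" by (simp add: C1_def)
lemma fin_C2: "finite (C2 j)" by (simp add: C2_def)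

lemma PP_A1: assumes "i0 < s" "m0 < f1"
  shows "PP (b1 i0 m0) = (of_nat f1 * (b1 i0 m0) ^ (f1 - 1)) *
     (\<Prod>i\<in>{..<s}-{i0}. (b1 i0 m0) ^ f1 - (w ^ (g * i)) ^ f1) *
     (\<Prod>j<t. (b1 i0 m0) ^ f2 - (w ^ (G + g * j)) ^ f2)"
proof -
  let ?x = "b1 i0 m0"
  have xA1: "?x \<in> A1" using assms by (auto simp: A1_def C1_def)
  have "AA - {?x} = (A1 - {?x}) \<union> A2" using xA1 A12_disj by (auto simp: AA_def)
  hence "PP ?x = (\<Prod>y\<in>(A1 - {?x}) \<union> A2. ?x - y)" unfolding PP_def by simp
  also have "\<dots> = (\<Prod>y\<in>A1 - {?x}. ?x - y) * (\<Prod>y\<in>A2. ?x - y)"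
    by (rule prod.union_disjoint) (use A12_disj in \<open>auto simp: A1_def A2_def fin_C1 fin_C2\<close>)
  also have "(\<Prod>y\<in>A1 - {?x}. ?x - y) = (\<Prod>y\<in>C1 i0 - {?x}. ?x - y) * (\<Prod>i\<in>{..<s}-{i0}. \<Prod>y\<in>C1 i. ?x - y)"
    unfolding A1_def using assms C1_disj
    by (intro prod_remove_union) (auto simp: fin_C1 C1_def)
  also have "(\<Prod>i\<in>{..<s}-{i0}. \<Prod>y\<in>C1 i. ?x - y) = (\<Prod>i\<in>{..<s}-{i0}. ?x ^ f1 - (w ^ (g * i)) ^ f1)"
    by (intro prod.cong refl prodC1) auto
  also have "(\<Prod>y\<in>A2. ?x - y) = (\<Prod>j<t. \<Prod>y\<in>C2 j. ?x - y)"
    unfolding A2_def using C2_disj by (intro prod_union_fam) (auto simp: fin_C2)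
  also have "\<dots> = (\<Prod>j<t. ?x ^ f2 - (w ^ (G + g * j)) ^ f2)"
    by (intro prod.cong refl prodC2) auto
  finally show ?thesis using ownC1[OF assms] by simp
qed

lemma PP_A2: assumes "j0 < t" "m0 < f2"
  shows "PP (b2 j0 m0) = (of_nat f2 * (b2 j0 m0) ^ (f2 - 1)) *
     (\<Prod>j\<in>{..<t}-{j0}. (b2 j0 m0) ^ f2 - (w ^ (G + g * j)) ^ f2) *
     (\<Prod>i<s. (b2 j0 m0) ^ f1 - (w ^ (g * i)) ^ f1)"
proof -
  let ?x = "b2 j0 m0"
  have xA2: "?x \<in> A2" using assms by (auto simp: A2_def C2_def)
  have "AA - {?x} = (A2 - {?x}) \<union> A1" using xA2 A12_disj by (auto simp: AA_def)
  hence "PP ?x = (\<Prod>y\<in>(A2 - {?x}) \<union> A1. ?x - y)" unfolding PP_def by simp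
  also have "\<dots> = (\<Prod>y\<in>A2 - {?x}. ?x - y) * (\<Prod>y\<in>A1. ?x - y)"
    by (rule prod.union_disjoint) (use A12_disj in \<open>auto simp: A1_def A2_def fin_C1 fin_C2\<close>)
  also have "(\<Prod>y\<in>A2 - {?x}. ?x - y) = (\<Prod>y\<in>C2 j0 - {?x}. ?x - y) * (\<Prod>j\<in>{..<t}-{j0}. \<Prod>y\<in>C2 j. ?x - y)"
    unfolding A2_def using assms C2_disj
    by (intro prod_remove_union) (auto simp: fin_C2 C2_def)
  also have "(\<Prod>j\<in>{..<t}-{j0}. \<Prod>y\<in>C2 j. ?x - y) = (\<Prod>j\<in>{..<t}-{j0}. ?x ^ f2 - (w ^ (G + g * j)) ^ f2)"
    by (intro prod.cong refl prodC2) auto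
  also have "(\<Prod>y\<in>A1. ?x - y) = (\<Prod>i<s. \<Prod>y\<in>C1 i. ?x - y)"
    unfolding A1_def using C1_disj by (intro prod_union_fam) (auto simp: fin_C1)
  also have "\<dots> = (\<Prod>i<s. ?x ^ f1 - (w ^ (g * i)) ^ f1)"
    by (intro prod.cong refl prodC1) auto
  finally show ?thesis using ownC2[OF assms] by simp
qed


lemma w_even_good: "(w ^ (2 * c)) ^ h = 1"
proof -
  have "(w ^ (2 * c)) ^ h = w ^ (2 * c * h)" by (simp only: power_mult)
  also have "2 * c * h = (q - 1) * c" using Eqh by simp
  finally have e: "(w ^ (2 * c)) ^ h = w ^ ((q - 1) * c)" .
  have "w ^ ((q - 1) * c) = 1" by (rule w_one) simp
  with e show ?thesis by simp
qed

lemma b1_good: "(b1 i m) ^ h = 1"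
proof -
  have "g * i + e1 * m = 2 * (G * i + G * D1 * m)" unfolding Eg1 Eg by (simp add: algebra_simps)
  hence "b1 i m = w ^ (2 * (G * i + G * D1 * m))" by (simp only: b1_exp)
  thus ?thesis by (simp only: w_even_good)
qed

lemma b2_good: "(b2 j m) ^ h = 1"
proof -
  obtain G' where G': "G = 2 * G'" using Geven by auto
  have "G + g * j + e2 * m = 2 * (G' + G * j + G * D2 * m)" unfolding Eg2 Eg G' by (simp add: algebra_simps)
  hence "b2 j m = w ^ (2 * (G' + G * j + G * D2 * m))" by (simp only: b2_exp)
  thus ?thesis by (simp only: w_even_good)
qed

lemma gi_lt: "i < D1 \<Longrightarrow> g * i < e1" using gpos Eg1 by simp
lemma Gj_lt: assumes "j < D2" shows "G + g * j < e2"
proof -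
  have "G + g * j < g * (Suc j)" using Gg by simp
  also have "g * Suc j \<le> e2" using assms Eg2 mult_le_mono2[of "Suc j" D2 g] by simp
  finally show ?thesis .
qed

lemma pow_f_mod: assumes "q - 1 = e * f" "f > 0" "w ^ (a * f) = w ^ (b * f)" shows "a mod e = b mod e"
proof -
  have "(a * f) mod (e * f) = (b * f) mod (e * f)" using w_mod_eq[OF assms(3)] assms(1) by simp
  hence "(a mod e) * f = (b mod e) * f" by (simp add: mod_mult_mult2)
  thus ?thesis using assms(2) by simp
qed

lemma modg: assumes "a mod e = b mod e" "g dvd e" shows "a mod g = b mod g"
  using assms by (metis mod_mod_cancel)

lemma g_dvd_e1: "g dvd e1" and g_dvd_e2: "g dvd e2" using Eg1 Eg2 by auto

lemma mod_g_0: "(g * a + e1 * b) mod g = 0" using g_dvd_e1 by (auto simp: Eg1)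
lemma mod_g_0': "(g * a) mod g = 0" by simp
lemma mod_g_G: "(G + g * a + e2 * b) mod g = G"
proof -
  have eq: "G + g * a + e2 * b = G + g * (a + D2 * b)" by (simp add: Eg2 algebra_simps)
  show ?thesis unfolding eq using Gg by simp
qed
lemma mod_g_G': "(G + g * a) mod g = G" using mod_g_G[of a 0] by simp

lemma gf1r: "g * f1 * (r - 1) = (q - 1) * (2 * L)"
  unfolding E1 Eg1 Er2 by (simp add: algebra_simps)
lemma gf2R: "g * f2 * R2 = (q - 1) * K"
  unfolding E2 Eg2 ER2 by (simp add: algebra_simps)
lemma e1f2R: "e1 * f2 * R2 = (q - 1) * (D1 * K)"
  unfolding E2 Eg1 Eg2 ER2 by (simp add: algebra_simps)
lemma Gf2R: "G * f2 * R2 = h * K"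
proof -
  have "2 * (G * f2 * R2) = 2 * (h * K)" using Eqh unfolding E2 Eg2 Eg ER2 by (simp add: algebra_simps)
  thus ?thesis by simp
qed
lemma Gf1r: "G * f1 * (r - 1) = (q - 1) * L"
  unfolding E1 Eg1 Eg Er2 by (simp add: algebra_simps)
lemma e2f1r: "e2 * f1 * (r - 1) = (q - 1) * c0"
proof -
  have "e2 * f1 * (r - 1) = (e2 * (r - 1)) * f1" by (simp add: algebra_simps)
  also have "\<dots> = (q - 1) * c0" unfolding Ec0 E1 by (simp add: algebra_simps)
  finally show ?thesis .
qed

lemma w_dvd: "(q - 1) dvd n \<Longrightarrow> w ^ (n + k) = w ^ k" using w_one by (simp add: power_add)

lemma y_R2: "(w ^ ((G + g * j) * f2)) ^ R2 = (-1) ^ K"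
proof -
  have "(G + g * j) * f2 * R2 = G * f2 * R2 + (g * f2 * R2) * j" by (simp add: algebra_simps)
  also have "\<dots> = (q - 1) * (K * j) + h * K" unfolding Gf2R gf2R by simp
  finally have ee: "(G + g * j) * f2 * R2 = (q - 1) * (K * j) + h * K" .
  have "(w ^ ((G + g * j) * f2)) ^ R2 = w ^ ((G + g * j) * f2 * R2)" by (simp only: power_mult)
  hence "(w ^ ((G + g * j) * f2)) ^ R2 = w ^ ((q - 1) * (K * j) + h * K)" by (simp only: ee)
  also have "\<dots> = w ^ (h * K)" by (rule w_dvd) simp
  finally show ?thesis by (simp add: w_hc)
qed

lemma R2_r1: "(x::'a) ^ (r + 1) = (x ^ R2) ^ 2"
proof -
  have "r + 1 = R2 * 2" using Er1 by simp
  moreover have "(x ^ R2) ^ 2 = x ^ (R2 * 2)" by (rule power_mult[symmetric])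
  ultimately show ?thesis by simp
qed

lemma own_good: assumes "n dvd (q - 1)" "n > 0" "(x::'a) ^ h = 1"
  shows "(of_nat n * x ^ (n - 1)) ^ h = (1::'a)"
proof -
  have "(x ^ (n - 1)) ^ h = x ^ ((n - 1) * h)" by (simp only: power_mult)
  also have "\<dots> = x ^ (h * (n - 1))" by (simp only: mult.commute)
  also have "\<dots> = (x ^ h) ^ (n - 1)" by (simp only: power_mult)
  finally have "(x ^ (n - 1)) ^ h = 1" using assms(3) by simp
  thus ?thesis using of_nat_good[OF assms(1,2)] by (simp add: power_mult_distrib)
qed


lemma pow_pow: "(w ^ a) ^ b = w ^ (a * b)" by (simp only: power_mult)

lemma b1_f1: "(b1 i m) ^ f1 = w ^ (g * i * f1)"
proof -
  have "(b1 i m) ^ f1 = w ^ ((g * i + e1 * m) * f1)" by (simp only: b1_exp pow_pow)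
  also have "(g * i + e1 * m) * f1 = (q - 1) * m + g * i * f1" unfolding E1 by (simp add: algebra_simps)
  finally show ?thesis by (simp only: w_dvd dvd_triv_left)
qed

lemma b2_f2: "(b2 j m) ^ f2 = w ^ ((G + g * j) * f2)"
proof -
  have "(b2 j m) ^ f2 = w ^ ((G + g * j + e2 * m) * f2)" by (simp only: b2_exp pow_pow)
  also have "(G + g * j + e2 * m) * f2 = (q - 1) * m + (G + g * j) * f2" unfolding E2 by (simp add: algebra_simps)
  finally show ?thesis by (simp only: w_dvd dvd_triv_left)
qed

lemma F1: assumes "i0 < s" "i < s" "i \<noteq> i0" "m0 < f1"
  shows "((b1 i0 m0) ^ f1 - (w ^ (g * i)) ^ f1) ^ h = 1"
proof -
  have x: "(w ^ (g * i0 * f1)) ^ (r - 1) = 1"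
    unfolding pow_pow using gf1r by (intro w_one) (metis dvd_triv_left mult.assoc mult.commute dvd_mult)
  have y: "(w ^ (g * i * f1)) ^ (r - 1) = 1"
    unfolding pow_pow using gf1r by (intro w_one) (metis dvd_triv_left mult.assoc mult.commute dvd_mult)
  have lt: "g * k * f1 < q - 1" if "k < s" for k
  proof -
    have "g * k < e1" using gi_lt[of k] that sD by simp
    thus ?thesis using f1pos unfolding E1 by simp
  qed
  have ne: "w ^ (g * i0 * f1) \<noteq> w ^ (g * i * f1)"
  proof
    assume "w ^ (g * i0 * f1) = w ^ (g * i * f1)"
    hence "g * i0 * f1 = g * i * f1" using w_inj lt assms(1,2) by blast
    thus False using assms(3) gpos f1pos by simp
  qed
  show ?thesis unfolding b1_f1 pow_pow using L1[OF x y ne] by (simp only: pow_pow)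
qed


lemma w_mul: "w ^ ((q - 1) * c) = 1" by (rule w_one) simp

lemma neg1_sq: "((-1::'a) ^ K) ^ 2 = 1"
proof -
  have "((-1::'a) ^ K) ^ 2 = ((-1) ^ 2) ^ K" by (simp only: power_mult[symmetric] mult.commute)
  thus ?thesis by simp
qed

lemma F2: assumes "i0 < s" "m0 < f1" "j < t"
  shows "((b1 i0 m0) ^ f2 - (w ^ (G + g * j)) ^ f2) ^ h = (-1) ^ R2 * (-1) ^ K"
proof -
  define x where "x = w ^ ((g * i0 + e1 * m0) * f2)"
  define y where "y = w ^ ((G + g * j) * f2)"
  have bx: "(b1 i0 m0) ^ f2 = x" unfolding x_def by (simp only: b1_exp pow_pow)
  have by': "(w ^ (G + g * j)) ^ f2 = y" unfolding y_def by (simp only: pow_pow)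
  have e: "(g * i0 + e1 * m0) * f2 * R2 = (q - 1) * (K * i0 + D1 * K * m0)"
  proof -
    have "(g * i0 + e1 * m0) * f2 * R2 = (g * f2 * R2) * i0 + (e1 * f2 * R2) * m0" by (simp add: algebra_simps)
    also have "\<dots> = (q - 1) * (K * i0 + D1 * K * m0)" unfolding gf2R e1f2R by (simp add: algebra_simps)
    finally show ?thesis .
  qed
  have xR: "x ^ R2 = 1" unfolding x_def pow_pow e by (rule w_mul)
  have yR: "y ^ R2 = (-1) ^ K" unfolding y_def by (rule y_R2)
  have x1: "x ^ (r + 1) = 1" unfolding R2_r1 xR by simp
  have y1: "y ^ (r + 1) = 1" unfolding R2_r1 yR by (rule neg1_sq)
  have ne: "x \<noteq> y"
  proof
    assume "x = y"
    hence "(g * i0 + e1 * m0) mod e2 = (G + g * j) mod e2"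
      unfolding x_def y_def by (rule pow_f_mod[OF E2 f2pos])
    hence "(g * i0 + e1 * m0) mod g = (G + g * j) mod g" using g_dvd_e2 by (rule modg)
    thus False using mod_g_0 mod_g_G' Gpos by simp
  qed
  show ?thesis unfolding bx by' using L2[OF x1 y1 ne] xR yR by simp
qed

lemma F3: assumes "j0 < t" "j < t" "j \<noteq> j0" "m0 < f2"
  shows "((b2 j0 m0) ^ f2 - (w ^ (G + g * j)) ^ f2) ^ h = (-1) ^ R2"
proof -
  define x where "x = w ^ ((G + g * j0) * f2)"
  define y where "y = w ^ ((G + g * j) * f2)"
  have bx: "(b2 j0 m0) ^ f2 = x" unfolding x_def by (rule b2_f2)
  have by': "(w ^ (G + g * j)) ^ f2 = y" unfolding y_def by (simp only: pow_pow)
  have xR: "x ^ R2 = (-1) ^ K" unfolding x_def by (rule y_R2)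
  have yR: "y ^ R2 = (-1) ^ K" unfolding y_def by (rule y_R2)
  have x1: "x ^ (r + 1) = 1" unfolding R2_r1 xR by (rule neg1_sq)
  have y1: "y ^ (r + 1) = 1" unfolding R2_r1 yR by (rule neg1_sq)
  have lt: "(G + g * k) * f2 < q - 1" if "k < t" for k
  proof -
    have "G + g * k < e2" using Gj_lt[of k] that tD by simp
    thus ?thesis using f2pos unfolding E2 by simp
  qed
  have ne: "x \<noteq> y"
  proof
    assume "x = y"
    hence "(G + g * j0) * f2 = (G + g * j) * f2" unfolding x_def y_def using w_inj lt assms(1,2) by blast
    thus False using assms(3) gpos f2pos by simp
  qed
  have "((-1::'a) ^ K) * (-1) ^ K = 1" using neg1_sq by (simp add: power2_eq_square)
  thus ?thesis unfolding bx by' using L2[OF x1 y1 ne] xR yR by (simp add: mult.assoc)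
qed

lemma F4: assumes "j0 < t" "m0 < f2" "i < s"
  shows "((b2 j0 m0) ^ f1 - (w ^ (g * i)) ^ f1) ^ h = 1"
proof -
  define x where "x = w ^ ((G + g * j0 + e2 * m0) * f1)"
  define y where "y = w ^ (g * i * f1)"
  have bx: "(b2 j0 m0) ^ f1 = x" unfolding x_def by (simp only: b2_exp pow_pow)
  have by': "(w ^ (g * i)) ^ f1 = y" unfolding y_def by (simp only: pow_pow)
  have ex: "(G + g * j0 + e2 * m0) * f1 * (r - 1) = (q - 1) * (L + 2 * L * j0 + c0 * m0)"
  proof -
    have "(G + g * j0 + e2 * m0) * f1 * (r - 1) = G * f1 * (r - 1) + (g * f1 * (r - 1)) * j0 + (e2 * f1 * (r - 1)) * m0"
      by (simp add: algebra_simps)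
    also have "\<dots> = (q - 1) * (L + 2 * L * j0 + c0 * m0)" unfolding Gf1r gf1r e2f1r by (simp add: algebra_simps)
    finally show ?thesis .
  qed
  have ey: "g * i * f1 * (r - 1) = (q - 1) * (2 * L * i)"
  proof -
    have "g * i * f1 * (r - 1) = (g * f1 * (r - 1)) * i" by (simp add: algebra_simps)
    also have "\<dots> = (q - 1) * (2 * L * i)" unfolding gf1r by (simp add: algebra_simps)
    finally show ?thesis .
  qed
  have x1: "x ^ (r - 1) = 1" unfolding x_def pow_pow ex by (rule w_mul)
  have y1: "y ^ (r - 1) = 1" unfolding y_def pow_pow ey by (rule w_mul)
  have ne: "x \<noteq> y"
  proof
    assume "x = y"
    hence "(G + g * j0 + e2 * m0) mod e1 = (g * i) mod e1"
      unfolding x_def y_def by (rule pow_f_mod[OF E1 f1pos])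
    hence "(G + g * j0 + e2 * m0) mod g = (g * i) mod g" using g_dvd_e1 by (rule modg)
    thus False using mod_g_G Gpos by simp
  qed
  show ?thesis unfolding bx by' using L1[OF x1 y1 ne] .
qed


lemma f1_dvd: "f1 dvd (q - 1)" using E1 by simp
lemma f2_dvd: "f2 dvd (q - 1)" using E2 by simp

lemma PP1: assumes "i0 < s" "m0 < f1"
  shows "(PP (b1 i0 m0)) ^ h = ((-1) ^ R2 * (-1) ^ K) ^ t"
proof -
  have o: "(of_nat f1 * (b1 i0 m0) ^ (f1 - 1)) ^ h = 1" by (rule own_good[OF f1_dvd f1pos b1_good])
  have p1: "(\<Prod>i\<in>{..<s}-{i0}. (b1 i0 m0) ^ f1 - (w ^ (g * i)) ^ f1) ^ h = 1"
    unfolding prod_power_distrib using F1 assms by (intro prod.neutral) auto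
  have p2: "(\<Prod>j<t. (b1 i0 m0) ^ f2 - (w ^ (G + g * j)) ^ f2) ^ h = ((-1) ^ R2 * (-1) ^ K) ^ t"
  proof -
    have "(\<Prod>j<t. (b1 i0 m0) ^ f2 - (w ^ (G + g * j)) ^ f2) ^ h = (\<Prod>j<t. ((-1::'a) ^ R2 * (-1) ^ K))"
      unfolding prod_power_distrib using F2 assms by (intro prod.cong refl) auto
    thus ?thesis by simp
  qed
  show ?thesis using o p1 p2 unfolding PP_A1[OF assms] power_mult_distrib by simp
qed

lemma PP2: assumes "j0 < t" "m0 < f2"
  shows "(PP (b2 j0 m0)) ^ h = ((-1) ^ R2) ^ (t - 1)"
proof -
  have o: "(of_nat f2 * (b2 j0 m0) ^ (f2 - 1)) ^ h = 1" by (rule own_good[OF f2_dvd f2pos b2_good])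
  have p1: "(\<Prod>i<s. (b2 j0 m0) ^ f1 - (w ^ (g * i)) ^ f1) ^ h = 1"
    unfolding prod_power_distrib using F4 assms by (intro prod.neutral) auto
  have p2: "(\<Prod>j\<in>{..<t}-{j0}. (b2 j0 m0) ^ f2 - (w ^ (G + g * j)) ^ f2) ^ h = ((-1) ^ R2) ^ (t - 1)"
  proof -
    have "(\<Prod>j\<in>{..<t}-{j0}. (b2 j0 m0) ^ f2 - (w ^ (G + g * j)) ^ f2) ^ h = (\<Prod>j\<in>{..<t}-{j0}. ((-1::'a) ^ R2))"
      unfolding prod_power_distrib using F3 assms by (intro prod.cong refl) auto
    thus ?thesis using assms by simp
  qed
  show ?thesis using o p1 p2 unfolding PP_A2[OF assms] power_mult_distrib by simp
qed

lemma AA_cases: "x \<in> AA \<Longrightarrow> (\<exists>i m. i < s \<and> m < f1 \<and> x = b1 i m) \<or> (\<exists>j m. j < t \<and> m < f2 \<and> x = b2 j m)"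
  by (auto simp: AA_def A1_def A2_def C1_def C2_def)

lemma AA_good: "x \<in> AA \<Longrightarrow> x ^ h = 1"
  using AA_cases b1_good b2_good by blast

lemma h_even: "even h"
  using Eh Er2 by simp


lemma neg1_pow_cases: "((-1::'a) ^ n) = 1 \<or> ((-1::'a) ^ n) = -1"
  by (cases "even n") auto

lemma sq_from_h: assumes "(lam::'a) ^ h = e" "P ^ h = e" "e \<noteq> 0" "lam \<noteq> 0"
  shows "\<exists>y. y ^ 2 = lam / P"
proof -
  have P0: "P \<noteq> 0" using assms(2,3) hpos by (auto simp: power_0_left)
  have "(lam / P) ^ h = 1" using assms P0 by (simp add: power_divide)
  moreover have "lam / P \<noteq> 0" using P0 assms(4) by simp
  ultimately show ?thesis using good_sq by blast
qed

theorem cs_part1: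
  assumes eq: "((-1::'a) ^ R2 * (-1) ^ K) ^ t = ((-1) ^ R2) ^ (t - 1)"
  shows "\<forall>k. 1 \<le> k \<and> 2 * k \<le> s * f1 + t * f2 \<longrightarrow>
     (\<exists>C :: (nat \<Rightarrow> 'a) set. nk_code (s * f1 + t * f2) k C \<and> is_MDS (s * f1 + t * f2) C
        \<and> self_orthogonal (s * f1 + t * f2) C)"
proof -
  define e :: 'a where "e = ((-1) ^ R2) ^ (t - 1)"
  have e_cases: "e = 1 \<or> e = -1" unfolding e_def power_mult[symmetric] by (rule neg1_pow_cases)
  define lam where "lam = (if e = 1 then 1 else w)"
  have lam_h: "lam ^ h = e" using e_cases w_h by (auto simp: lam_def)
  have lam0: "lam \<noteq> 0" using w0 by (simp add: lam_def)
  have e0: "e \<noteq> 0" using e_cases by auto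
  have PPh: "(PP x) ^ h = e" if "x \<in> AA" for x
    using AA_cases[OF that] PP1 PP2 eq unfolding e_def by auto
  have "\<forall>x\<in>AA. \<exists>y. y ^ 2 = lam / (\<Prod>y\<in>AA - {x}. x - y)"
    using sq_from_h[OF lam_h PPh e0 lam0] unfolding PP_def by blast
  from codes_from_set(1)[OF fin_AA lam0] this show ?thesis unfolding card_AA by blast
qed

theorem cs_part23:
  assumes e1: "((-1::'a) ^ R2 * (-1) ^ K) ^ t = 1" and e2: "((-1::'a) ^ R2) ^ (t - 1) = 1"
  shows "\<forall>k. 1 \<le> k \<and> 2 * k \<le> s * f1 + t * f2 + 1 \<longrightarrow>
     (\<exists>C :: (nat \<Rightarrow> 'a) set. nk_code (s * f1 + t * f2 + 1) k C \<and> is_MDS (s * f1 + t * f2 + 1) C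
        \<and> self_orthogonal (s * f1 + t * f2 + 1) C)"
    and "odd (s * f1 + t * f2 + 1) \<Longrightarrow> 3 \<le> s * f1 + t * f2 + 1 \<Longrightarrow>
     (\<exists>C :: (nat \<Rightarrow> 'a) set. is_MDS (s * f1 + t * f2 + 1) C \<and> almost_self_dual (s * f1 + t * f2 + 1) C)"
proof -
  define S where "S = insert 0 AA"
  have finS: "finite S" using fin_AA by (simp add: S_def)
  have cardS: "card S = s * f1 + t * f2 + 1" using fin_AA zero_notin card_AA by (simp add: S_def)
  have one: "(1::'a) ^ h = 1" by simp
  have sq: "\<forall>x\<in>S. \<exists>y. y ^ 2 = 1 / (\<Prod>y\<in>S - {x}. x - y)"
  proof
    fix x assume "x \<in> S"
    show "\<exists>y. y ^ 2 = 1 / (\<Prod>y\<in>S - {x}. x - y)"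
    proof (cases "x = 0")
      case True
      have "S - {x} = AA" using zero_notin True by (auto simp: S_def)
      hence "(\<Prod>y\<in>S - {x}. x - y) = (\<Prod>y\<in>AA. - y)" using True by simp
      moreover have "(\<Prod>y\<in>AA. - y) ^ h = 1"
        unfolding prod_power_distrib
        by (intro prod.neutral ballI) (simp add: power_minus_even[OF h_even] AA_good)
      ultimately show ?thesis using sq_from_h[OF one _ one_neq_zero one_neq_zero] by simp
    next
      case False
      hence xA: "x \<in> AA" using \<open>x \<in> S\<close> by (simp add: S_def)
      have "S - {x} = insert 0 (AA - {x})" using False by (auto simp: S_def)
      hence "(\<Prod>y\<in>S - {x}. x - y) = x * PP x"
        unfolding PP_def using fin_AA zero_notin by simp
      moreover have "(x * PP x) ^ h = 1"
        using AA_cases[OF xA] PP1 PP2 e1 e2 AA_good[OF xA] by (auto simp: power_mult_distrib)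
      ultimately show ?thesis using sq_from_h[OF one _ one_neq_zero one_neq_zero] by simp
    qed
  qed
  show "\<forall>k. 1 \<le> k \<and> 2 * k \<le> s * f1 + t * f2 + 1 \<longrightarrow>
     (\<exists>C :: (nat \<Rightarrow> 'a) set. nk_code (s * f1 + t * f2 + 1) k C \<and> is_MDS (s * f1 + t * f2 + 1) C
        \<and> self_orthogonal (s * f1 + t * f2 + 1) C)"
    using codes_from_set(1)[OF finS one_neq_zero sq[rule_format]] unfolding cardS by blast
  show "odd (s * f1 + t * f2 + 1) \<Longrightarrow> 3 \<le> s * f1 + t * f2 + 1 \<Longrightarrow>
     (\<exists>C :: (nat \<Rightarrow> 'a) set. is_MDS (s * f1 + t * f2 + 1) C \<and> almost_self_dual (s * f1 + t * f2 + 1) C)"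
    using codes_from_set(2)[OF finS one_neq_zero sq[rule_format]] unfolding cardS by blast
qed

end


lemma nt_facts:
  fixes e1 e2 r l :: nat
  assumes pos: "e1 > 0" "e2 > 0" and l2: "l \<ge> 2"
    and e1c: "e1 mod 2 ^ (l + 1) = 2 ^ l mod 2 ^ (l + 1)" and e2d: "2 ^ l dvd e2"
    and div1: "2 * e2 dvd e1 * (r + 1)" and div2: "e1 dvd e2 * (r - 1)"
    and r_odd: "odd r" and r3: "r \<ge> 3"
  shows "4 dvd gcd e1 e2" "odd (e1 div gcd e1 e2)"
    "2 * (e1 div gcd e1 e2) dvd (r - 1)" "2 * (e2 div gcd e1 e2) dvd (r + 1)"
proof -
  define g where "g = gcd e1 e2"
  define D1 where "D1 = e1 div g"
  define D2 where "D2 = e2 div g"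
  have gpos: "g > 0" using pos by (simp add: g_def)
  have eD1: "e1 = g * D1" unfolding D1_def g_def by simp
  have eD2: "e2 = g * D2" unfolding D2_def g_def by simp
  have lt: "2 ^ l < (2::nat) ^ (l + 1)" by simp
  have e1m: "e1 mod 2 ^ (l + 1) = 2 ^ l" using e1c lt by simp
  have "e1 = 2 ^ (l + 1) * (e1 div 2 ^ (l + 1)) + 2 ^ l" using e1m by (metis div_mult_mod_eq mult.commute)
  hence "e1 = 2 ^ l * (2 * (e1 div 2 ^ (l + 1)) + 1)" by (simp add: algebra_simps)
  hence e1d: "2 ^ l dvd e1" by (metis dvd_triv_left)
  have nd: "\<not> 2 ^ (l + 1) dvd e1" using e1m by (auto simp: dvd_eq_mod_eq_0)
  have gl: "2 ^ l dvd g" unfolding g_def using e1d e2d by simp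
  have "(4::nat) dvd 2 ^ l"
  proof -
    have "l = 2 + (l - 2)" using l2 by simp
    hence "(2::nat) ^ l = 2 ^ (2 + (l - 2))" by (rule arg_cong)
    hence "(2::nat) ^ l = 2 ^ 2 * 2 ^ (l - 2)" by (simp only: power_add)
    thus ?thesis by simp
  qed
  thus "4 dvd gcd e1 e2" using gl unfolding g_def by (rule dvd_trans)
  have oD1: "odd D1"
  proof
    assume "even D1"
    then obtain k where "D1 = 2 * k" by auto
    hence "e1 = (g * 2) * k" using eD1 by simp
    moreover have "2 ^ (l + 1) dvd g * 2" using gl by simp
    ultimately show False using nd by (metis dvd_mult2)
  qed
  thus "odd (e1 div gcd e1 e2)" unfolding D1_def g_def .
  have cop: "coprime D1 D2" unfolding D1_def D2_def g_def by (rule div_gcd_coprime) (use pos in auto)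
  have "g * D1 dvd g * (D2 * (r - 1))" using div2 unfolding eD1 eD2 by (simp add: mult.assoc)
  hence "D1 dvd D2 * (r - 1)" using gpos by simp
  hence "D1 dvd r - 1" using cop by (simp add: coprime_dvd_mult_right_iff)
  moreover have "2 dvd r - 1" using r_odd r3 by simp
  moreover have "coprime 2 D1" using oD1 by simp
  ultimately have "2 * D1 dvd r - 1" by (intro divides_mult)
  thus "2 * (e1 div gcd e1 e2) dvd (r - 1)" unfolding D1_def g_def .
  have "g * (2 * D2) dvd g * (D1 * (r + 1))" using div1 unfolding eD1 eD2 by (simp add: algebra_simps)
  hence "2 * D2 dvd D1 * (r + 1)" using gpos by simp
  moreover have "coprime (2 * D2) D1" using oD1 cop by (simp add: coprime_commute)
  ultimately have "2 * D2 dvd r + 1" using coprime_dvd_mult_right_iff[of "2 * D2" D1 "r + 1"] by blast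
  thus "2 * (e2 div gcd e1 e2) dvd (r + 1)" unfolding D2_def g_def .
qed

theorem theorem4:
  fixes q r e1 f1 e2 f2 l s t :: nat
  assumes field_size: "card (UNIV :: 'a set) = q"
    and q_def: "q = r ^ 2"
    and r_pp: "prime_power r" and r_odd: "odd r"
    and pos: "e1 > 0" "f1 > 0" "e2 > 0" "f2 > 0"
    and fact1: "q - 1 = e1 * f1" and fact2: "q - 1 = e2 * f2"
    and l2: "l \<ge> 2"
    and e1_cong: "e1 mod 2 ^ (l + 1) = 2 ^ l mod 2 ^ (l + 1)"
    and e2_dvd: "2 ^ l dvd e2"
    and div1: "2 * e2 dvd e1 * (r + 1)"
    and div2: "e1 dvd e2 * (r - 1)"
    and s_rng: "1 \<le> s" "s \<le> e1 div gcd e1 e2"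
    and t_rng: "1 \<le> t" "t \<le> e2 div gcd e1 e2"
  shows
    "(even (t * e1 * (r + 1) div (2 * e2) + (r + 1) div 2) \<and> even (s * f1 + t * f2) \<longrightarrow>
       (\<forall>k. 1 \<le> k \<and> k \<le> (s * f1 + t * f2) div 2 - 1 \<longrightarrow>
          (\<exists>C :: (nat \<Rightarrow> 'a::{finite,field}) set. nk_code (s * f1 + t * f2) k C
              \<and> is_MDS (s * f1 + t * f2) C \<and> self_orthogonal (s * f1 + t * f2) C)))
     \<and> (even (t * (r + 1) * e1 div (2 * e2)) \<and> even ((r + 1) div 2) \<and> even (s * f1 + t * f2) \<longrightarrow>
       (\<exists>C :: (nat \<Rightarrow> 'a) set. is_MDS (s * f1 + t * f2 + 1) C
              \<and> almost_self_dual (s * f1 + t * f2 + 1) C))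
     \<and> (even (t * e1 * (r + 1) div (2 * e2) + t * (r + 1) div 2) \<and> even ((t - 1) * (r + 1) div 2)
          \<and> odd (s * f1 + t * f2) \<longrightarrow>
       (\<forall>k. 1 \<le> k \<and> k \<le> (s * f1 + t * f2 + 1) div 2 - 1 \<longrightarrow>
          (\<exists>C :: (nat \<Rightarrow> 'a) set. nk_code (s * f1 + t * f2 + 1) k C
              \<and> is_MDS (s * f1 + t * f2 + 1) C \<and> self_orthogonal (s * f1 + t * f2 + 1) C)))"
proof -
  obtain p m where pm: "Factorial_Ring.prime p" "m \<ge> 1" "r = p ^ m" using r_pp by (auto simp: prime_power_def)
  have "p \<ge> 2" using pm(1) by (simp add: prime_ge_2_nat)
  moreover have "p \<le> r" using pm(2,3) by (metis One_nat_def power_increasing power_one_right prime_gt_0_nat pm(1) Suc_leI)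
  ultimately have r2: "r \<ge> 2" by simp
  have r3: "r \<ge> 3" using r2 r_odd by (cases "r = 2") auto
  note nt = nt_facts[OF pos(1) pos(3) l2 e1_cong e2_dvd div1 div2 r_odd r3]
  define g where "g = gcd e1 e2"
  define D1 where "D1 = e1 div g"
  define D2 where "D2 = e2 div g"
  obtain k4 where k4: "g = 4 * k4" using nt(1) unfolding g_def by (rule dvdE)
  define G where "G = 2 * k4"
  have gpos: "g > 0" using pos unfolding g_def by simp
  have Eg: "g = 2 * G" using k4 by (simp add: G_def)
  have Geven: "even G" by (simp add: G_def)
  have Gpos: "G > 0" using gpos k4 by (simp add: G_def)
  have Eg1: "e1 = g * D1" unfolding D1_def g_def by simp
  have Eg2: "e2 = g * D2" unfolding D2_def g_def by simp
  have oD1: "odd D1" using nt(2) unfolding D1_def g_def .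
  obtain L where EL: "r - 1 = 2 * D1 * L" using nt(3) unfolding D1_def g_def by (rule dvdE)
  obtain K where EK: "r + 1 = 2 * D2 * K" using nt(4) unfolding D2_def g_def by (rule dvdE)
  define R2 where "R2 = D2 * K"
  have Er1: "r + 1 = 2 * R2" using EK by (simp add: R2_def)
  define h where "h = (r - 1) * R2"
  have qq: "q - 1 = (r - 1) * (r + 1)"
  proof -
    obtain r' where "r = Suc r'" using r3 by (cases r) auto
    thus ?thesis using q_def by (simp add: power2_eq_square algebra_simps)
  qed
  have Eqh: "q - 1 = 2 * h" unfolding h_def qq Er1 by (simp add: algebra_simps)
  obtain c0 where Ec0: "e2 * (r - 1) = e1 * c0" using div2 by (rule dvdE)
  obtain w :: 'a where w: "w \<noteq> 0" "\<forall>x. x \<noteq> 0 \<longrightarrow> (\<exists>i. x = w ^ i)"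
      "\<forall>n. w ^ n = 1 \<longleftrightarrow> (card (UNIV :: 'a set) - 1) dvd n"
    using primitive_exists by blast
  have sD: "s \<le> D1" using s_rng unfolding D1_def g_def by simp
  have tD: "t \<le> D2" using t_rng unfolding D2_def g_def by simp
  interpret cs w q r e1 e2 f1 f2 g G D1 D2 K L R2 h c0 s t
    by unfold_locales (use field_size q_def r_pp w fact1 fact2 Eg1 Eg2 Eg Geven Gpos Er1 EK EL Eqh Ec0 sD tD r3 in
        \<open>auto simp: R2_def h_def\<close>)
  have X1: "t * e1 * (r + 1) div (2 * e2) = t * D1 * K"
  proof -
    have "t * e1 * (r + 1) = (2 * e2) * (t * D1 * K)" unfolding Eg1 Eg2 EK by (simp add: algebra_simps)
    thus ?thesis using pos by simp
  qed
  have X2: "t * (r + 1) * e1 div (2 * e2) = t * D1 * K" using X1 by (simp add: mult.commute mult.left_commute)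
  have X3: "(r + 1) div 2 = R2" using Er1 by simp
  have X4: "t * (r + 1) div 2 = t * R2" using Er1 by simp
  have X5: "(t - 1) * (r + 1) div 2 = (t - 1) * R2" using Er1 by simp
  have par: "even (t * D1 * K) \<longleftrightarrow> even (t * K)" using oD1 by simp
  have m1: "((-1::'a) ^ R2 * (-1) ^ K) ^ t = (-1) ^ (t * R2 + t * K)"
    by (simp add: power_add power_mult_distrib flip: power_mult) (simp add: mult.commute)
  have m2: "((-1::'a) ^ R2) ^ (t - 1) = (-1) ^ ((t - 1) * R2)"
    by (simp flip: power_mult) (simp add: mult.commute)
  have pw: "(-1::'a) ^ a = (-1) ^ b" if "even a = even b" for a b
    using that by (cases "even a") auto
  have n2: "2 \<le> s * f1 + t * f2"
  proof -
    have "1 \<le> s * f1" using s_rng pos by simp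
    moreover have "1 \<le> t * f2" using t_rng pos by simp
    ultimately show ?thesis by linarith
  qed
  show ?thesis
  proof (intro conjI impI)
    assume h1: "even (t * e1 * (r + 1) div (2 * e2) + (r + 1) div 2) \<and> even (s * f1 + t * f2)"
    have "((-1::'a) ^ R2 * (-1) ^ K) ^ t = ((-1) ^ R2) ^ (t - 1)"
      unfolding m1 m2
    proof (rule pw)
      have "t * R2 = (t - 1) * R2 + R2" using t_rng by (cases t) auto
      thus "even (t * R2 + t * K) = even ((t - 1) * R2)"
        using h1 par unfolding X1 X3 by auto
    qed
    from cs_part1[OF this] show "\<forall>k. 1 \<le> k \<and> k \<le> (s * f1 + t * f2) div 2 - 1 \<longrightarrow>
          (\<exists>C :: (nat \<Rightarrow> 'a) set. nk_code (s * f1 + t * f2) k C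
              \<and> is_MDS (s * f1 + t * f2) C \<and> self_orthogonal (s * f1 + t * f2) C)"
      by auto
  next
    assume h2: "even (t * (r + 1) * e1 div (2 * e2)) \<and> even ((r + 1) div 2) \<and> even (s * f1 + t * f2)"
    have a: "((-1::'a) ^ R2 * (-1) ^ K) ^ t = 1"
      unfolding m1 using h2 par unfolding X2 X3 by simp
    have b: "((-1::'a) ^ R2) ^ (t - 1) = 1"
      unfolding m2 using h2 unfolding X3 by simp
    show "\<exists>C :: (nat \<Rightarrow> 'a) set. is_MDS (s * f1 + t * f2 + 1) C \<and> almost_self_dual (s * f1 + t * f2 + 1) C"
      by (rule cs_part23(2)[OF a b]) (use h2 n2 in auto)
  next
    assume h3: "even (t * e1 * (r + 1) div (2 * e2) + t * (r + 1) div 2) \<and> even ((t - 1) * (r + 1) div 2)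
          \<and> odd (s * f1 + t * f2)"
    have a: "((-1::'a) ^ R2 * (-1) ^ K) ^ t = 1"
      unfolding m1 using h3 par unfolding X1 X4 by auto
    have b: "((-1::'a) ^ R2) ^ (t - 1) = 1"
      unfolding m2 using h3 unfolding X5 by simp
    from cs_part23(1)[OF a b] show "\<forall>k. 1 \<le> k \<and> k \<le> (s * f1 + t * f2 + 1) div 2 - 1 \<longrightarrow>
          (\<exists>C :: (nat \<Rightarrow> 'a) set. nk_code (s * f1 + t * f2 + 1) k C
              \<and> is_MDS (s * f1 + t * f2 + 1) C \<and> self_orthogonal (s * f1 + t * f2 + 1) C)"
      by auto
  qed
qed


end
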